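(* Let $d\ge 1$ and let $\mathcal P=\{P^j\}_{j=1}^d$, where each $P^j=\{p^j_i\}_{i=1}^\infty$ is a sequence of natural numbers different from $1$, and assume $$\sup_{i\in\mathbb N,\,1\le j\le d}p^j_i<\infty .$$ Let $\Psi$ be a complex-valued additive function on the $\mathcal P$-ary parallelepipeds $\Lambda^d$, fix $I_0\in\Lambda^d$, and let $h_m:I_0\to\mathbb R$ ($m\in\mathbb N$) be measurable functions satisfying: (i) $0\le h_1(x)\le h_2(x)\le\dots\le h_m(x)\le\dots$ and $\lim_{m\to\infty}h_m(x)=\infty$; (ii) there is a constant $C>0$ such that for every $m\in\mathbb N$ there are parallelepipeds $I^m_1,\dots,I^m_{n_m}\in\Lambda^d$ with pairwise disjoint interiors and $\bigcup_{k=1}^{n_m}I^m_k=I_0$, satisfying $\sup_{x\in I^m_k}h_m(x)\le C\inf_{x\in I^m_k}h_m(x)$ for all $m\in\mathbb N$, $1\le k\le n_m$; (iii) $\inf_{m,k}\int_{I^m_k}h_m(x)\,dx>0$. Suppose that $$\lim_{m\to\infty}\int_{\{x\in I_0:\ \Psi^*(x)>h_m(x)\}}h_m(x)\,dx=0$$ and that $\Psi'(x)$ exists for almost every $x$. Then for every $I\in\Lambda^d$ with $I\subset I_0$, $$\Psi(I)=\lim_{m\to\infty}\int_I\big[\Psi'(x)\big]_{h_m(x)}\,dx .$$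
   Context: Notation: $m^j_0=1$, $m^j_k=\prod_{i=1}^k p^j_i$. $\Lambda^d_k$ is the set of all $\mathcal P$-ary parallelepipeds of rank $k$: $$I=\Big[\tfrac{n_1}{m^1_k},\tfrac{n_1+1}{m^1_k}\Big]\times\dots\times\Big[\tfrac{n_d}{m^d_k},\tfrac{n_d+1}{m^d_k}\Big],\quad n_1,\dots,n_d\in\mathbb Z,$$ and $\Lambda^d=\bigcup_{k\ge0}\Lambda^d_k$. A complex-valued function $\Psi$ on $\Lambda^d$ is additive if $\Psi(I)=\sum_{i=1}^n\Psi(I_i)$ whenever $I,I_1,\dots,I_n\in\Lambda^d$, $I=\bigcup_i I_i$ and the interiors of the $I_i$ are pairwise disjoint. A point $x=(x_1,\dots,x_d)\in\mathbb R^d$ is $\mathcal P$-irrational if for each $j$ and each $n\in\mathbb N$, $x_j\prod_{i=1}^n p^j_i\notin\mathbb Z$. For $\mathcal P$-irrational $x$: $$\Psi'(x)=\lim_{k\to\infty,\ x\in I_k\in\Lambda^d_k}\frac{\Psi(I_k)}{\mu(I_k)},\qquad \Psi^*(x)=\sup_{I:\ x\in I\in\Lambda^d}\frac{|\Psi(I)|}{\mu(I)},$$ where $\mu$ is Lebesgue measure. For a complex function $f$ and nonnegative function $\lambda$, the truncation is $[f(x)]_{\lambda(x)}=f(x)$ if $|f(x)|\le\lambda(x)$ and $0$ if $|f(x)|>\lambda(x)$. *)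

theory Defs
  imports "HOL-Analysis.Analysis"
begin

text \<open>The dimension d is CARD('n) for a finite index type 'n; points of R^d are
  real^'n.  The system P is a function p :: 'n \<Rightarrow> nat \<Rightarrow> nat, where p j i is p^j_i,
  used for i \<ge> 1 only.\<close>

definition mprod :: "('n \<Rightarrow> nat \<Rightarrow> nat) \<Rightarrow> 'n \<Rightarrow> nat \<Rightarrow> nat" where
  "mprod p j k = (\<Prod>i=1..k. p j i)"

definition par :: "('n::finite \<Rightarrow> nat \<Rightarrow> nat) \<Rightarrow> nat \<Rightarrow> ('n \<Rightarrow> int) \<Rightarrow> (real^'n) set" where
  "par p k n = {x. \<forall>j. real_of_int (n j) / real (mprod p j k) \<le> x $ j
                    \<and> x $ j \<le> (real_of_int (n j) + 1) / real (mprod p j k)}"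

definition Lambda_k :: "('n::finite \<Rightarrow> nat \<Rightarrow> nat) \<Rightarrow> nat \<Rightarrow> (real^'n) set set" where
  "Lambda_k p k = range (par p k)"

definition Lambda :: "('n::finite \<Rightarrow> nat \<Rightarrow> nat) \<Rightarrow> (real^'n) set set" where
  "Lambda p = (\<Union>k. Lambda_k p k)"

definition additive_on_Lambda ::
  "('n::finite \<Rightarrow> nat \<Rightarrow> nat) \<Rightarrow> ((real^'n) set \<Rightarrow> complex) \<Rightarrow> bool" where
  "additive_on_Lambda p Psi \<longleftrightarrow>
     (\<forall>I F. I \<in> Lambda p \<and> finite F \<and> F \<subseteq> Lambda p \<and> I = \<Union>F \<and>
        pairwise (\<lambda>A B. interior A \<inter> interior B = {}) F
        \<longrightarrow> Psi I = (\<Sum>J\<in>F. Psi J))"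

definition P_irrational :: "('n::finite \<Rightarrow> nat \<Rightarrow> nat) \<Rightarrow> real^'n \<Rightarrow> bool" where
  "P_irrational p x \<longleftrightarrow> (\<forall>j. \<forall>n\<ge>1. x $ j * real (mprod p j n) \<notin> \<int>)"

abbreviation mu :: "(real^'n::finite) set \<Rightarrow> real" where
  "mu I \<equiv> measure lborel I"

definition has_P_deriv ::
  "('n::finite \<Rightarrow> nat \<Rightarrow> nat) \<Rightarrow> ((real^'n) set \<Rightarrow> complex) \<Rightarrow> real^'n \<Rightarrow> complex \<Rightarrow> bool" where
  "has_P_deriv p Psi x L \<longleftrightarrow> P_irrational p x \<and>
     (\<forall>e>0. \<exists>K. \<forall>k\<ge>K. \<forall>I\<in>Lambda_k p k. x \<in> I \<longrightarrow>
        cmod (Psi I / complex_of_real (mu I) - L) < e)"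

definition P_deriv_exists ::
  "('n::finite \<Rightarrow> nat \<Rightarrow> nat) \<Rightarrow> ((real^'n) set \<Rightarrow> complex) \<Rightarrow> real^'n \<Rightarrow> bool" where
  "P_deriv_exists p Psi x \<longleftrightarrow> (\<exists>L. has_P_deriv p Psi x L)"

definition P_deriv ::
  "('n::finite \<Rightarrow> nat \<Rightarrow> nat) \<Rightarrow> ((real^'n) set \<Rightarrow> complex) \<Rightarrow> real^'n \<Rightarrow> complex" where
  "P_deriv p Psi x = (THE L. has_P_deriv p Psi x L)"

definition P_maximal ::
  "('n::finite \<Rightarrow> nat \<Rightarrow> nat) \<Rightarrow> ((real^'n) set \<Rightarrow> complex) \<Rightarrow> real^'n \<Rightarrow> ereal" where
  "P_maximal p Psi x = (SUP I\<in>{I\<in>Lambda p. x \<in> I}. ereal (cmod (Psi I) / mu I))"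

definition trunc :: "complex \<Rightarrow> real \<Rightarrow> complex" where
  "trunc f l = (if cmod f \<le> l then f else 0)"

end

theory Submission
  imports Defs
begin


definition MM :: "('n \<Rightarrow> nat \<Rightarrow> nat) \<Rightarrow> 'n \<Rightarrow> nat \<Rightarrow> real" where
  "MM p j k = real (mprod p j k)"

definition idx :: "('n::finite \<Rightarrow> nat \<Rightarrow> nat) \<Rightarrow> nat \<Rightarrow> real^'n \<Rightarrow> ('n \<Rightarrow> int)" where
  "idx p k x = (\<lambda>j. \<lfloor>x $ j * MM p j k\<rfloor>)"

definition QQ :: "('n \<Rightarrow> nat \<Rightarrow> nat) \<Rightarrow> nat \<Rightarrow> nat \<Rightarrow> 'n \<Rightarrow> nat" where
  "QQ p r k j = (\<Prod>i\<in>{r<..k}. p j i)"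

lemma div_eq_bounds: "0 < (Q::int) \<Longrightarrow> (a div Q = b) \<longleftrightarrow> (b*Q \<le> a \<and> a < b*Q + Q)"
proof
  assume Q: "0 < Q" and "a div Q = b"
  moreover have "a = Q * (a div Q) + a mod Q" by simp
  moreover have "0 \<le> a mod Q" "a mod Q < Q" using Q by auto
  ultimately show "b*Q \<le> a \<and> a < b*Q + Q" by (simp add: algebra_simps)
next
  assume Q: "0 < Q" and h: "b*Q \<le> a \<and> a < b*Q + Q"
  have "a div Q = ((a - b*Q) + b*Q) div Q" by simp
  also have "\<dots> = b + (a - b*Q) div Q" using div_mult_self1[of Q "a - b*Q" b] Q by simp
  also have "(a - b*Q) div Q = 0" using h Q by (intro div_pos_pos_trivial) auto
  finally show "a div Q = b" by simp
qed


locale pary =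
  fixes p :: "'n::finite \<Rightarrow> nat \<Rightarrow> nat"
  assumes p2: "\<And>j i. 1 \<le> i \<Longrightarrow> 2 \<le> p j i"
begin

lemma p_pos: "1 \<le> i \<Longrightarrow> 0 < p j i"
  using p2[of i j] by linarith

lemma mprod_pos: "0 < mprod p j k"
  unfolding mprod_def using p_pos by (auto intro!: prod_pos)

lemma MM_pos: "0 < MM p j k"
  using mprod_pos by (simp add: MM_def)

lemma mprod_split: "r \<le> k \<Longrightarrow> mprod p j k = mprod p j r * QQ p r k j"
proof -
  assume "r \<le> k"
  then have "{1..k} = {1..r} \<union> {r<..k}" by auto
  moreover have "{1..r} \<inter> {r<..k} = {}" by auto
  ultimately show ?thesis unfolding mprod_def QQ_def
    by (simp add: prod.union_disjoint[symmetric])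
qed

lemma QQ_pos: "0 < QQ p r k j"
  unfolding QQ_def using p_pos by (auto intro!: prod_pos)

lemma QQ_Suc: "QQ p k (Suc k) j = p j (Suc k)"
  proof -
  have "{k<..Suc k} = {Suc k}" by auto
  then show ?thesis unfolding QQ_def by simp
qed

lemma MM_split: "r \<le> k \<Longrightarrow> MM p j k = MM p j r * real (QQ p r k j)"
  by (simp add: MM_def mprod_split)

lemma idx_div: "r \<le> k \<Longrightarrow> idx p r x j = idx p k x j div int (QQ p r k j)"
proof -
  assume rk: "r \<le> k"
  have "x $ j * MM p j r = (x $ j * MM p j k) / real_of_int (int (QQ p r k j))"
    using MM_split[OF rk, of j] QQ_pos[of r k j] by (simp add: field_simps)
  then show ?thesis unfolding idx_def
    using floor_divide_real_eq_div[of "int (QQ p r k j)" "x $ j * MM p j k"] by simp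
qed

lemma mem_par: "x \<in> par p k n \<longleftrightarrow> (\<forall>j. real_of_int (n j) \<le> x $ j * MM p j k \<and> x $ j * MM p j k \<le> real_of_int (n j) + 1)"
  unfolding par_def using MM_pos by (simp add: MM_def[symmetric] divide_le_eq le_divide_eq)

lemma par_idx: "x \<in> par p k (idx p k x)"
  unfolding mem_par idx_def by simp


lemma MM_0: "MM p j 0 = 1"
  by (simp add: MM_def mprod_def)

lemma irr_notint: "P_irrational p x \<Longrightarrow> x $ j * MM p j k \<notin> \<int>"
proof (cases "k = 0")
  case True
  assume irr: "P_irrational p x"
  have "x $ j * real (mprod p j 1) \<notin> \<int>" using irr unfolding P_irrational_def by auto
  then have "x $ j \<notin> \<int>"
    by (metis Ints_mult Ints_of_nat)
  then show ?thesis using True by (simp add: MM_0)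
next
  case False
  assume irr: "P_irrational p x"
  then show ?thesis using False unfolding P_irrational_def MM_def by auto
qed

lemma irr_par: "P_irrational p x \<Longrightarrow> x \<in> par p k n \<Longrightarrow> idx p k x = n"
proof
  fix j assume irr: "P_irrational p x" and xin: "x \<in> par p k n"
  let ?y = "x $ j * MM p j k"
  have ni: "?y \<notin> \<int>" using irr_notint[OF irr] .
  have b: "real_of_int (n j) \<le> ?y" "?y \<le> real_of_int (n j) + 1" using xin unfolding mem_par by auto
  have "?y \<noteq> real_of_int (n j)" using ni by (metis Ints_of_int)
  moreover have "?y \<noteq> real_of_int (n j) + 1" using ni by (metis Ints_of_int of_int_add of_int_1)
  ultimately have "real_of_int (n j) \<le> ?y" "?y < real_of_int (n j) + 1" using b by auto
  then show "idx p k x j = n j" unfolding idx_def by (simp add: floor_eq_iff)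
qed

lemma irr_par_iff: "P_irrational p x \<Longrightarrow> x \<in> par p k n \<longleftrightarrow> idx p k x = n"
  using irr_par par_idx by blast

definition lo :: "nat \<Rightarrow> ('n \<Rightarrow> int) \<Rightarrow> real^'n" where
  "lo k n = (\<chi> j. real_of_int (n j) / MM p j k)"
definition hi :: "nat \<Rightarrow> ('n \<Rightarrow> int) \<Rightarrow> real^'n" where
  "hi k n = (\<chi> j. (real_of_int (n j) + 1) / MM p j k)"

lemma par_cbox: "par p k n = cbox (lo k n) (hi k n)"
  unfolding par_def lo_def hi_def mem_box_cart(2) set_eq_iff by (simp add: MM_def)

definition vol :: "nat \<Rightarrow> real" where
  "vol k = (\<Prod>j\<in>UNIV. 1 / MM p j k)"

lemma vol_pos: "0 < vol k"
  unfolding vol_def using MM_pos by (auto intro!: prod_pos)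

lemma lo_le_hi: "lo k n $ j \<le> hi k n $ j"
  unfolding lo_def hi_def using MM_pos[of j k] by (simp add: divide_right_mono)

lemma par_nonempty: "par p k n \<noteq> {}"
proof -
  have "lo k n \<in> cbox (lo k n) (hi k n)" using lo_le_hi by (auto simp: mem_box_cart(2))
  then show ?thesis unfolding par_cbox by blast
qed

lemma mu_par: "mu (par p k n) = vol k"
proof -
  have "mu (par p k n) = (\<Prod>j\<in>UNIV. hi k n $ j - lo k n $ j)"
    using content_cbox_cart[of "lo k n" "hi k n"] par_nonempty par_cbox by simp
  also have "\<dots> = vol k" unfolding vol_def hi_def lo_def
    by (intro prod.cong) (auto simp: diff_divide_distrib[symmetric])
  finally show ?thesis .
qed

lemma par_compact: "compact (par p k n)"
  unfolding par_cbox by simp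

lemma par_sets[measurable]: "par p k n \<in> sets lebesgue" "par p k n \<in> sets lborel"
  unfolding par_cbox by auto

lemma interior_par: "interior (par p k n) = {x. \<forall>j. real_of_int (n j) < x $ j * MM p j k \<and> x $ j * MM p j k < real_of_int (n j) + 1}"
  unfolding par_cbox interior_cbox mem_box_cart(1) set_eq_iff lo_def hi_def
  using MM_pos by (simp add: divide_less_eq less_divide_eq)

lemma par_inj: "par p k n = par p k n' \<Longrightarrow> n = n'"
proof -
  assume eq: "par p k n = par p k n'"
  define x :: "real^'n" where "x = (\<chi> j. (real_of_int (n j) + 1/2) / MM p j k)"
  have "x \<in> interior (par p k n)"
    unfolding interior_par x_def using MM_pos by (simp add: less_le)
  then have xi: "x \<in> interior (par p k n')" using eq by simp
  have a: "\<forall>j. real_of_int (n j) < x $ j * MM p j k \<and> x $ j * MM p j k < real_of_int (n j) + 1"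
    using \<open>x \<in> interior (par p k n)\<close> unfolding interior_par by blast
  have b: "\<forall>j. real_of_int (n' j) < x $ j * MM p j k \<and> x $ j * MM p j k < real_of_int (n' j) + 1"
    using xi unfolding interior_par by blast
  show "n = n'"
  proof
    fix j
    from a have "\<lfloor>x $ j * MM p j k\<rfloor> = n j" by (simp add: floor_eq_iff less_imp_le)
    moreover from b have "\<lfloor>x $ j * MM p j k\<rfloor> = n' j" by (simp add: floor_eq_iff less_imp_le)
    ultimately
    show "n j = n' j" by simp
  qed
qed

lemma par_Lambda: "par p k n \<in> Lambda p"
  unfolding Lambda_def Lambda_k_def by auto

lemma par_Lambda_k: "par p k n \<in> Lambda_k p k"
  unfolding Lambda_k_def by auto


definition Ch :: "nat \<Rightarrow> nat \<Rightarrow> ('n \<Rightarrow> int) \<Rightarrow> ('n \<Rightarrow> int) set" where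
  "Ch r k n = {n'. \<forall>j. n' j div int (QQ p r k j) = n j}"

lemma Ch_bounds: "n' \<in> Ch r k n \<longleftrightarrow> (\<forall>j. n j * int (QQ p r k j) \<le> n' j \<and> n' j < n j * int (QQ p r k j) + int (QQ p r k j))"
  unfolding Ch_def using div_eq_bounds QQ_pos by (simp add: of_nat_0_less_iff)

lemma Ch_finite: "finite (Ch r k n)"
proof -
  have "Ch r k n \<subseteq> Pi\<^sub>E UNIV (\<lambda>j. {n j * int (QQ p r k j) .. n j * int (QQ p r k j) + int (QQ p r k j)})"
    by (auto simp: Ch_bounds PiE_def extensional_def less_imp_le)
  moreover have "finite (Pi\<^sub>E UNIV (\<lambda>j. {n j * int (QQ p r k j) .. n j * int (QQ p r k j) + int (QQ p r k j)}))"
    by (intro finite_PiE) auto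
  ultimately show ?thesis by (rule finite_subset)
qed

lemma idx_Ch: "r \<le> k \<Longrightarrow> idx p r x = n \<longleftrightarrow> idx p k x \<in> Ch r k n"
  unfolding Ch_def using idx_div by (auto simp: fun_eq_iff)

lemma Ch_self: "Ch k k n = {n}"
  unfolding Ch_def QQ_def by (auto simp: fun_eq_iff)

lemma Ch_union: "r \<le> k \<Longrightarrow> \<Union>(par p k ` Ch r k n) = par p r n"
proof (intro equalityI subsetI)
  assume rk: "r \<le> k"
  fix x assume "x \<in> \<Union>(par p k ` Ch r k n)"
  then obtain n' where n': "n' \<in> Ch r k n" "x \<in> par p k n'" by auto
  show "x \<in> par p r n" unfolding mem_par
  proof
    fix j
    define Q where "Q = real (QQ p r k j)"
    have Q: "0 < Q" using QQ_pos unfolding Q_def by simp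
    have e: "x $ j * MM p j k = (x $ j * MM p j r) * Q" using MM_split[OF rk] unfolding Q_def by simp
    have b1: "real_of_int (n j) * Q \<le> real_of_int (n' j)" "real_of_int (n' j) + 1 \<le> (real_of_int (n j) + 1) * Q"
    proof -
      have i1: "n j * int (QQ p r k j) \<le> n' j" "n' j + 1 \<le> n j * int (QQ p r k j) + int (QQ p r k j)"
        using n'(1) unfolding Ch_bounds by (auto simp: zless_imp_add1_zle)
      have "real_of_int (n j * int (QQ p r k j)) \<le> real_of_int (n' j)" using i1(1) by linarith
      then show "real_of_int (n j) * Q \<le> real_of_int (n' j)" unfolding Q_def by simp
      have "real_of_int (n' j + 1) \<le> real_of_int (n j * int (QQ p r k j) + int (QQ p r k j))"
        using i1(2) by linarith
      then show "real_of_int (n' j) + 1 \<le> (real_of_int (n j) + 1) * Q" unfolding Q_def by (simp add: distrib_right)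
    qed
    have b2: "real_of_int (n' j) \<le> x $ j * MM p j k" "x $ j * MM p j k \<le> real_of_int (n' j) + 1"
      using n'(2) unfolding mem_par by auto
    have "real_of_int (n j) * Q \<le> (x $ j * MM p j r) * Q" "(x $ j * MM p j r) * Q \<le> (real_of_int (n j) + 1) * Q"
      using b1 b2 e by linarith+
    then show "real_of_int (n j) \<le> x $ j * MM p j r \<and> x $ j * MM p j r \<le> real_of_int (n j) + 1"
      using Q by simp
  qed
next
  assume rk: "r \<le> k"
  fix x assume x: "x \<in> par p r n"
  define n' where "n' = (\<lambda>j. min (\<lfloor>x $ j * MM p j k\<rfloor>) (n j * int (QQ p r k j) + int (QQ p r k j) - 1))"
  have "n' \<in> Ch r k n" "x \<in> par p k n'"
  proof -
    have "\<forall>j. n j * int (QQ p r k j) \<le> n' j \<and> n' j < n j * int (QQ p r k j) + int (QQ p r k j)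
           \<and> real_of_int (n' j) \<le> x $ j * MM p j k \<and> x $ j * MM p j k \<le> real_of_int (n' j) + 1"
    proof
      fix j
      define Q where "Q = real (QQ p r k j)"
      have Q: "0 < Q" using QQ_pos unfolding Q_def by simp
      have e: "x $ j * MM p j k = (x $ j * MM p j r) * Q" using MM_split[OF rk] unfolding Q_def by simp
      have b: "real_of_int (n j) \<le> x $ j * MM p j r" "x $ j * MM p j r \<le> real_of_int (n j) + 1"
        using x unfolding mem_par by auto
      have c1: "real_of_int (n j) * Q \<le> x $ j * MM p j k" using mult_right_mono[OF b(1) less_imp_le[OF Q]] e by argo
      have c2: "x $ j * MM p j k \<le> real_of_int (n j) * Q + Q" using mult_right_mono[OF b(2) less_imp_le[OF Q]] e
        by (simp only: distrib_right mult_1_left)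
      have f1: "n j * int (QQ p r k j) \<le> \<lfloor>x $ j * MM p j k\<rfloor>"
        using c1 unfolding Q_def by (simp add: le_floor_iff)
      show "n j * int (QQ p r k j) \<le> n' j \<and> n' j < n j * int (QQ p r k j) + int (QQ p r k j)
           \<and> real_of_int (n' j) \<le> x $ j * MM p j k \<and> x $ j * MM p j k \<le> real_of_int (n' j) + 1"
      proof (cases "\<lfloor>x $ j * MM p j k\<rfloor> \<le> n j * int (QQ p r k j) + int (QQ p r k j) - 1")
        case True
        then have "n' j = \<lfloor>x $ j * MM p j k\<rfloor>" unfolding n'_def by simp
        then show ?thesis using f1 True by simp
      next
        case False
        then have nn: "n' j = n j * int (QQ p r k j) + int (QQ p r k j) - 1" unfolding n'_def by simp
        have "real_of_int (n j * int (QQ p r k j) + int (QQ p r k j)) \<le> x $ j * MM p j k"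
          using False by (metis le_floor_iff not_le zle_diff1_eq)
        then have "real_of_int (n j) * Q + Q \<le> x $ j * MM p j k" unfolding Q_def by simp
        then have "x $ j * MM p j k = real_of_int (n j) * Q + Q" using c2 by simp
        then show ?thesis using nn QQ_pos[of r k j] unfolding Q_def by simp
      qed
    qed
    then show "n' \<in> Ch r k n" "x \<in> par p k n'" unfolding Ch_bounds mem_par by auto
  qed
  then show "x \<in> \<Union>(par p k ` Ch r k n)" by auto
qed

lemma par_interior_disj: "n \<noteq> n' \<Longrightarrow> interior (par p k n) \<inter> interior (par p k n') = {}"
proof (rule ccontr)
  assume ne: "n \<noteq> n'" and "interior (par p k n) \<inter> interior (par p k n') \<noteq> {}"
  then obtain x where "x \<in> interior (par p k n)" "x \<in> interior (par p k n')" by blast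
  then have a: "\<forall>j. real_of_int (n j) < x $ j * MM p j k \<and> x $ j * MM p j k < real_of_int (n j) + 1"
    and b: "\<forall>j. real_of_int (n' j) < x $ j * MM p j k \<and> x $ j * MM p j k < real_of_int (n' j) + 1"
    unfolding interior_par by blast+
  have "n = n'"
  proof
    fix j
    from a have "\<lfloor>x $ j * MM p j k\<rfloor> = n j" by (simp add: floor_eq_iff less_imp_le)
    moreover from b have "\<lfloor>x $ j * MM p j k\<rfloor> = n' j" by (simp add: floor_eq_iff less_imp_le)
    ultimately show "n j = n' j" by simp
  qed
  with ne show False by simp
qed

lemma additive_Ch:
  assumes add: "additive_on_Lambda p Psi" and rk: "r \<le> k"
  shows "Psi (par p r n) = (\<Sum>n'\<in>Ch r k n. Psi (par p k n'))"
proof -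
  have "Psi (par p r n) = (\<Sum>J\<in>par p k ` Ch r k n. Psi J)"
    using add unfolding additive_on_Lambda_def
  proof (elim allE impE)
    show "par p r n \<in> Lambda p \<and> finite (par p k ` Ch r k n) \<and> par p k ` Ch r k n \<subseteq> Lambda p \<and>
        par p r n = \<Union> (par p k ` Ch r k n) \<and>
        pairwise (\<lambda>A B. interior A \<inter> interior B = {}) (par p k ` Ch r k n)"
    proof (intro conjI)
      show "pairwise (\<lambda>A B. interior A \<inter> interior B = {}) (par p k ` Ch r k n)"
        unfolding pairwise_def
      proof (intro ballI impI)
        fix A B assume "A \<in> par p k ` Ch r k n" "B \<in> par p k ` Ch r k n" "A \<noteq> B"
        then obtain a b where "A = par p k a" "B = par p k b" "a \<noteq> b" by auto
        then show "interior A \<inter> interior B = {}" using par_interior_disj by simp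
      qed
    qed (use Ch_finite Ch_union[OF rk] par_Lambda in auto)
  qed
  also have "\<dots> = (\<Sum>n'\<in>Ch r k n. Psi (par p k n'))"
    by (rule sum.reindex_cong[where l="par p k"]) (auto simp: inj_on_def par_inj)
  finally show ?thesis .
qed


lemma idx_anc: "r \<le> k \<Longrightarrow> idx p r x = (\<lambda>j. idx p k x j div int (QQ p r k j))"
  using idx_div by auto

lemma par_idx_mono: "s \<le> k \<Longrightarrow> par p k (idx p k x) \<subseteq> par p s (idx p s x)"
  using Ch_union[of s k "idx p s x"] idx_Ch[of s k x "idx p s x"] by auto

lemma Ch_sub: "r \<le> k \<Longrightarrow> n' \<in> Ch r k n \<Longrightarrow> par p k n' \<subseteq> par p r n"
  using Ch_union[of r k n] by blast

end

lemma fiber_sets: "{x::real^'n::finite. idx p k x = n} \<in> sets borel"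
proof -
  have "{x::real^'n. idx p k x = n} = (\<Inter>j. {x. \<lfloor>x $ j * MM p j k\<rfloor> = n j})"
    unfolding idx_def by (auto simp: fun_eq_iff)
  also have "\<dots> \<in> sets borel"
    by (intro sets.countable_INT') auto
  finally show ?thesis .
qed

lemma fiber_sets_leb[measurable]: "{x::real^'n::finite. idx p k x = n} \<in> sets lebesgue"
proof -
  have "{x::real^'n::finite. idx p k x = n} \<in> sets lborel" using fiber_sets by simp
  then show ?thesis by (rule sets_completionI_sets)
qed

lemma idx_meas_borel: "idx p k \<in> borel \<rightarrow>\<^sub>M count_space (UNIV :: ('n::finite \<Rightarrow> int) set)"
proof (rule measurable_count_space_eq2_countable[THEN iffD2])
  show "idx p k \<in> space borel \<rightarrow> UNIV \<and> (\<forall>a\<in>UNIV. idx p k -` {a} \<inter> space borel \<in> sets borel)"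
    using fiber_sets[of p k] by (auto simp: vimage_def)
qed

lemma idx_meas: "idx p k \<in> lebesgue \<rightarrow>\<^sub>M count_space (UNIV :: ('n::finite \<Rightarrow> int) set)"
proof -
  have "idx p k \<in> lborel \<rightarrow>\<^sub>M count_space (UNIV :: ('n::finite \<Rightarrow> int) set)"
    using idx_meas_borel by simp
  then show ?thesis by (rule measurable_completion)
qed


context pary
begin

definition gg :: "((real^'n) set \<Rightarrow> complex) \<Rightarrow> nat \<Rightarrow> real^'n \<Rightarrow> complex" where
  "gg Psi k x = Psi (par p k (idx p k x)) / complex_of_real (vol k)"

lemma gg_meas_borel: "gg Psi k \<in> borel_measurable borel"
  unfolding gg_def
  by (rule measurable_compose_countable[where f="\<lambda>n x. Psi (par p k n) / complex_of_real (vol k)" and g="idx p k"])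
     (auto intro: idx_meas_borel)

lemma gg_meas[measurable]: "gg Psi k \<in> borel_measurable lebesgue"
proof -
  have "gg Psi k \<in> borel_measurable lborel" using gg_meas_borel by simp
  then show ?thesis by (rule measurable_completion)
qed

lemma emeasure_par_fin: "emeasure lebesgue (par p k n) < \<infinity>"
proof -
  have "emeasure lebesgue (par p k n) = emeasure lborel (par p k n)" using par_sets(2) by (simp add: emeasure_completion)
  also have "\<dots> < \<infinity>" using emeasure_bounded_finite[OF compact_imp_bounded[OF par_compact]] by simp
  finally show ?thesis .
qed

lemma measure_par_leb: "measure lebesgue (par p k n) = vol k"
  using mu_par par_sets(2) by (simp add: measure_completion)

end

locale pary_irr = pary p for p :: "'n::finite \<Rightarrow> nat \<Rightarrow> nat" +
  assumes irr: "AE x in lebesgue. P_irrational p x"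
begin

lemma AE_par_fiber: "AE x in lebesgue. (x \<in> par p k n) = (x \<in> {x. idx p k x = n})"
  using irr by (rule AE_mp) (auto simp: irr_par_iff)

lemma emeasure_fiber: "emeasure lebesgue {x. idx p k x = n} = emeasure lebesgue (par p k n)"
  using emeasure_eq_AE[OF AE_par_fiber] by simp

lemma emeasure_fiber_fin: "emeasure lebesgue {x. idx p k x = n} < \<infinity>"
  using emeasure_fiber emeasure_par_fin by simp

lemma measure_fiber: "measure lebesgue {x. idx p k x = n} = vol k"
  using measure_eq_AE[OF AE_par_fiber] measure_par_leb by simp

lemma exists_irr: "\<exists>z. P_irrational p z \<and> idx p k z = n"
proof (rule ccontr)
  assume "\<not> ?thesis"
  then have "AE x in lebesgue. x \<notin> {x. idx p k x = n}"
    using irr by (rule_tac AE_mp) auto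
  then have "emeasure lebesgue {x. idx p k x = n} = 0"
    by (subst (asm) AE_iff_measurable[of "{x. idx p k x = n}"]) auto
  then have "measure lebesgue {x. idx p k x = n} = 0" by (simp add: measure_def)
  then show False using measure_fiber[of k n] vol_pos[of k] by simp
qed

lemma fiber_sum: "r \<le> k \<Longrightarrow> indicator {x. idx p r x = n} x *\<^sub>R (f x :: complex)
   = (\<Sum>n'\<in>Ch r k n. indicator {x. idx p k x = n'} x *\<^sub>R f x)"
proof -
  assume rk: "r \<le> k"
  have "(\<Sum>n'\<in>Ch r k n. indicator {x. idx p k x = n'} x *\<^sub>R f x)
      = (\<Sum>n'\<in>Ch r k n. if idx p k x = n' then f x else 0)"
    by (intro sum.cong) (auto simp: indicator_def)
  also have "\<dots> = (if idx p k x \<in> Ch r k n then f x else 0)"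
    using Ch_finite by (simp add: sum.delta)
  also have "\<dots> = indicator {x. idx p r x = n} x *\<^sub>R f x"
    using idx_Ch[OF rk] by (auto simp: indicator_def)
  finally show ?thesis by simp
qed

lemma KI:
  assumes add: "additive_on_Lambda p Psi" and rk: "r \<le> k"
  shows "integrable lebesgue (\<lambda>x. indicator {x. idx p r x = n} x *\<^sub>R gg Psi k x)"
    and "integral\<^sup>L lebesgue (\<lambda>x. indicator {x. idx p r x = n} x *\<^sub>R gg Psi k x) = Psi (par p r n)"
proof -
  have eq: "(\<lambda>x. indicator {x. idx p r x = n} x *\<^sub>R gg Psi k x)
    = (\<lambda>x. \<Sum>n'\<in>Ch r k n. indicator {x. idx p k x = n'} x *\<^sub>R (Psi (par p k n') / complex_of_real (vol k)))"
  proof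
    fix x
    show "indicator {x. idx p r x = n} x *\<^sub>R gg Psi k x =
       (\<Sum>n'\<in>Ch r k n. indicator {x. idx p k x = n'} x *\<^sub>R (Psi (par p k n') / complex_of_real (vol k)))"
      unfolding fiber_sum[OF rk]
      by (intro sum.cong) (auto simp: indicator_def gg_def)
  qed
  have int: "\<And>n'. integrable lebesgue (\<lambda>x. indicator {x. idx p k x = n'} x *\<^sub>R (Psi (par p k n') / complex_of_real (vol k)))"
    using emeasure_fiber_fin by (intro integrable_scaleR_left integrable_real_indicator) auto
  show "integrable lebesgue (\<lambda>x. indicator {x. idx p r x = n} x *\<^sub>R gg Psi k x)"
    unfolding eq by (rule Bochner_Integration.integrable_sum, rule int)
  have "integral\<^sup>L lebesgue (\<lambda>x. indicator {x. idx p r x = n} x *\<^sub>R gg Psi k x)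
     = (\<Sum>n'\<in>Ch r k n. vol k *\<^sub>R (Psi (par p k n') / complex_of_real (vol k)))"
    unfolding eq
  proof (subst Bochner_Integration.integral_sum)
    show "\<And>n'. n' \<in> Ch r k n \<Longrightarrow> integrable lebesgue (\<lambda>x. indicator {x. idx p k x = n'} x *\<^sub>R (Psi (par p k n') / complex_of_real (vol k)))"
      using int by blast
    show "(\<Sum>i\<in>Ch r k n. integral\<^sup>L lebesgue (\<lambda>x. indicator {x. idx p k x = i} x *\<^sub>R (Psi (par p k i) / complex_of_real (vol k))))
      = (\<Sum>n'\<in>Ch r k n. vol k *\<^sub>R (Psi (par p k n') / complex_of_real (vol k)))"
    proof (rule sum.cong[OF refl])
      fix i
      show "integral\<^sup>L lebesgue (\<lambda>x. indicator {x. idx p k x = i} x *\<^sub>R (Psi (par p k i) / complex_of_real (vol k)))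
         = vol k *\<^sub>R (Psi (par p k i) / complex_of_real (vol k))"
        using measure_fiber[of k i] emeasure_fiber_fin[of k i] by (subst integral_scaleR_left) auto
    qed
  qed
  also have "\<dots> = (\<Sum>n'\<in>Ch r k n. Psi (par p k n'))"
    using vol_pos[of k] by (intro sum.cong) (auto simp: scaleR_conv_of_real)
  also have "\<dots> = Psi (par p r n)" using additive_Ch[OF add rk] by simp
  finally show "integral\<^sup>L lebesgue (\<lambda>x. indicator {x. idx p r x = n} x *\<^sub>R gg Psi k x) = Psi (par p r n)" .
qed

end


context pary
begin

lemma deriv_lim: "has_P_deriv p Psi x L \<Longrightarrow> (\<lambda>k. gg Psi k x) \<longlonglongrightarrow> L"
proof (rule LIMSEQ_I)
  fix e :: real assume d: "has_P_deriv p Psi x L" and e: "0 < e"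
  then obtain K where K: "\<forall>k\<ge>K. \<forall>I\<in>Lambda_k p k. x \<in> I \<longrightarrow> cmod (Psi I / complex_of_real (mu I) - L) < e"
    unfolding has_P_deriv_def by blast
  show "\<exists>no. \<forall>n\<ge>no. norm (gg Psi n x - L) < e"
  proof (intro exI allI impI)
    fix k assume "K \<le> k"
    then show "norm (gg Psi k x - L) < e"
      using K \<open>K \<le> k\<close> par_Lambda_k[of k "idx p k x"] par_idx[of x k] mu_par[of k "idx p k x"] unfolding gg_def by metis
  qed
qed

lemma P_deriv_eq: "has_P_deriv p Psi x L \<Longrightarrow> P_deriv p Psi x = L"
  unfolding P_deriv_def
  by (rule the_equality) (auto dest!: deriv_lim intro: LIMSEQ_unique)

lemma P_deriv_lim: "P_deriv_exists p Psi x \<Longrightarrow> (\<lambda>k. gg Psi k x) \<longlonglongrightarrow> P_deriv p Psi x"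
  unfolding P_deriv_exists_def using P_deriv_eq deriv_lim by blast

lemma P_deriv_meas:
  assumes "AE x in lebesgue. P_deriv_exists p Psi x"
  shows "P_deriv p Psi \<in> borel_measurable lebesgue"
proof (rule borel_measurable_AE)
  show "(\<lambda>x. lim (\<lambda>k. gg Psi k x)) \<in> borel_measurable lebesgue"
    by (rule borel_measurable_lim_metric) (rule gg_meas)
  show "AE x in lebesgue. lim (\<lambda>k. gg Psi k x) = P_deriv p Psi x"
    using assms by (rule AE_mp) (auto dest: P_deriv_lim limI)
qed

lemma vol_Suc: "vol k = vol (Suc k) * (\<Prod>j\<in>UNIV. real (p j (Suc k)))"
proof -
  have "\<And>j. MM p j (Suc k) = MM p j k * real (p j (Suc k))"
    unfolding MM_def mprod_def by simp
  then have "\<And>j. 1 / MM p j k = 1 / MM p j (Suc k) * real (p j (Suc k))"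
    using MM_pos p_pos[of "Suc k"] by (simp add: field_simps)
  then have "vol k = (\<Prod>j\<in>UNIV. 1 / MM p j (Suc k) * real (p j (Suc k)))"
    unfolding vol_def by simp
  then show ?thesis unfolding vol_def by (simp only: prod.distrib)
qed

lemma vol_le: "(\<And>j i. 1 \<le> i \<Longrightarrow> p j i \<le> B) \<Longrightarrow> vol k \<le> real B ^ CARD('n) * vol (Suc k)"
proof -
  assume pB: "\<And>j i. 1 \<le> i \<Longrightarrow> p j i \<le> B"
  have "(\<Prod>j\<in>UNIV. real (p j (Suc k))) \<le> (\<Prod>j\<in>(UNIV::'n set). real B)"
    using pB by (intro prod_mono) auto
  also have "\<dots> = real B ^ CARD('n)" by simp
  finally show ?thesis using vol_Suc[of k] vol_pos[of "Suc k"]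
    by (simp add: mult.commute mult_left_mono)
qed

end




locale est = pary_irr p for p :: "'n::finite \<Rightarrow> nat \<Rightarrow> nat" +
  fixes Psi :: "(real^'n) set \<Rightarrow> complex"
    and I0 :: "(real^'n) set" and lam :: "real^'n \<Rightarrow> real" and G :: "(real^'n) set"
    and F :: "(real^'n) set set" and C \<delta> :: real and r :: nat and nI :: "'n \<Rightarrow> int"
    and B :: nat and \<Lambda> :: real
  assumes add: "additive_on_Lambda p Psi"
    and dexists: "AE x in lebesgue. P_deriv_exists p Psi x"
    and pB: "\<And>j i. 1 \<le> i \<Longrightarrow> p j i \<le> B"
    and I0L: "I0 \<in> Lambda p"
    and IsubI0: "par p r nI \<subseteq> I0"
    and lam_meas[measurable]: "lam \<in> borel_measurable lebesgue"
    and lam_nn: "\<And>x. x \<in> I0 \<Longrightarrow> 0 \<le> lam x"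
    and lam_bdd: "\<And>x. x \<in> I0 \<Longrightarrow> lam x \<le> \<Lambda>"
    and Ffin: "finite F" and FL: "F \<subseteq> Lambda p" and FU: "\<Union>F = I0"
    and ratio: "\<And>K x y. K \<in> F \<Longrightarrow> x \<in> K \<Longrightarrow> y \<in> K \<Longrightarrow> lam x \<le> C * lam y"
    and Cpos: "0 < C"
    and delta: "\<And>K. K \<in> F \<Longrightarrow> \<delta> \<le> integral\<^sup>L lebesgue (\<lambda>x. indicator K x * lam x)"
    and G_def: "G = {x\<in>I0. ereal (lam x) < P_maximal p Psi x}"
    and G_meas[measurable]: "G \<in> sets lebesgue"
    and small1: "integral\<^sup>L lebesgue (\<lambda>x. indicator G x * lam x) < \<delta>"
    and small2: "integral\<^sup>L lebesgue (\<lambda>x. indicator G x * lam x) < vol r * \<delta> / (C * measure lebesgue I0)"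
begin

definition anc :: "nat \<Rightarrow> nat \<Rightarrow> ('n \<Rightarrow> int) \<Rightarrow> ('n \<Rightarrow> int)" where
  "anc a b n = (\<lambda>j. n j div int (QQ p a b j))"
definition bad :: "nat \<Rightarrow> ('n \<Rightarrow> int) \<Rightarrow> bool" where
  "bad k n \<longleftrightarrow> par p k n \<subseteq> G"
definition inpc :: "nat \<Rightarrow> ('n \<Rightarrow> int) \<Rightarrow> bool" where
  "inpc k n \<longleftrightarrow> (\<exists>K\<in>F. par p k n \<subseteq> K)"
definition stop :: "nat \<Rightarrow> ('n \<Rightarrow> int) \<Rightarrow> bool" where
  "stop k n \<longleftrightarrow> inpc k n \<and> (\<exists>c\<in>Ch k (Suc k) n. bad (Suc k) c)"
definition free :: "nat \<Rightarrow> real^'n \<Rightarrow> bool" where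
  "free k x \<longleftrightarrow> (\<forall>k'. r \<le> k' \<and> k' < k \<longrightarrow> \<not> stop k' (idx p k' x))"
definition SS :: "nat \<Rightarrow> (nat \<times> ('n \<Rightarrow> int)) set" where
  "SS k = {(k', n'). r \<le> k' \<and> k' < k \<and> n' \<in> Ch r k' nI \<and> stop k' n' \<and>
            (\<forall>k''. r \<le> k'' \<and> k'' < k' \<longrightarrow> \<not> stop k'' (anc k'' k' n'))}"
definition TT :: "real^'n \<Rightarrow> complex" where
  "TT x = trunc (P_deriv p Psi x) (lam x)"

abbreviation fib :: "nat \<Rightarrow> ('n \<Rightarrow> int) \<Rightarrow> (real^'n) set" where
  "fib k n \<equiv> {x. idx p k x = n}"

lemma I0_par: obtains s0 n0 where "I0 = par p s0 n0"
  using I0L unfolding Lambda_def Lambda_k_def by auto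

lemma I0_sets[measurable]: "I0 \<in> sets lebesgue"
  using I0_par by (metis par_sets(1))

lemma I0_fin: "emeasure lebesgue I0 < \<infinity>"
  using I0_par by (metis emeasure_par_fin)

lemma I0_measure_pos: "0 < measure lebesgue I0"
  using I0_par by (metis measure_par_leb vol_pos)

lemma Lam_nn: "0 \<le> \<Lambda>"
proof -
  obtain s0 n0 where "I0 = par p s0 n0" by (rule I0_par)
  then obtain y where "y \<in> I0" using par_nonempty by blast
  then show ?thesis using lam_nn lam_bdd by force
qed

lemma lam_int: "A \<in> sets lebesgue \<Longrightarrow> A \<subseteq> I0 \<Longrightarrow> integrable lebesgue (\<lambda>x. indicator A x * lam x)"
proof (rule Bochner_Integration.integrable_bound)
  show "integrable lebesgue (\<lambda>x. \<Lambda> * indicator I0 x)"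
    using I0_fin by (intro integrable_mult_right integrable_real_indicator) auto
  assume "A \<in> sets lebesgue" "A \<subseteq> I0"
  then show "(\<lambda>x. indicator A x * lam x) \<in> borel_measurable lebesgue" by measurable
  show "AE x in lebesgue. norm (indicator A x * lam x) \<le> norm (\<Lambda> * indicator I0 x)"
    using \<open>A \<subseteq> I0\<close> lam_nn lam_bdd Lam_nn by (auto simp: indicator_def)
qed

lemma G_sub: "G \<subseteq> I0" unfolding G_def by auto

lemma par_I: "n \<in> Ch r k nI \<Longrightarrow> r \<le> k \<Longrightarrow> par p k n \<subseteq> I0"
  using Ch_sub IsubI0 by blast

lemma piece: assumes "P_irrational p z" "z \<in> I0"
  obtains s where "par p s (idx p s z) \<in> F"
proof -
  obtain K where K: "K \<in> F" "z \<in> K" using assms FU by auto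
  then obtain s nK where "K = par p s nK" using FL unfolding Lambda_def Lambda_k_def by auto
  then have "K = par p s (idx p s z)" using irr_par[OF assms(1)] K by simp
  then show ?thesis using K that by simp
qed

lemma int_mono_lam: "A \<in> sets lebesgue \<Longrightarrow> A' \<in> sets lebesgue \<Longrightarrow> A \<subseteq> A' \<Longrightarrow> A' \<subseteq> I0 \<Longrightarrow>
   integral\<^sup>L lebesgue (\<lambda>x. indicator A x * lam x) \<le> integral\<^sup>L lebesgue (\<lambda>x. indicator A' x * lam x)"
  by (intro integral_mono lam_int) (auto simp: indicator_def lam_nn subset_iff)

lemma lam_lower: assumes K: "K \<in> F" and w: "w \<in> K"
  shows "\<delta> / (C * measure lebesgue I0) \<le> lam w"
proof -
  have KI0: "K \<subseteq> I0" using K FU by auto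
  obtain s nK where Kp: "K = par p s nK" using K FL unfolding Lambda_def Lambda_k_def by auto
  have Ks[measurable]: "K \<in> sets lebesgue" using Kp by simp
  have "\<delta> \<le> integral\<^sup>L lebesgue (\<lambda>x. indicator K x * lam x)" using delta K by simp
  also have "\<dots> \<le> integral\<^sup>L lebesgue (\<lambda>x. indicator K x * (C * lam w))"
  proof (rule integral_mono)
    show "integrable lebesgue (\<lambda>x. indicator K x * lam x)" using lam_int KI0 by simp
    show "integrable lebesgue (\<lambda>x. indicator K x * (C * lam w))"
      using Kp emeasure_par_fin by (intro integrable_mult_left integrable_real_indicator) auto
    show "\<And>x. x \<in> space lebesgue \<Longrightarrow> indicator K x * lam x \<le> indicator K x * (C * lam w)"
      using ratio[OF K _ w] by (auto simp: indicator_def)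
  qed
  also have "\<dots> = measure lebesgue K * (C * lam w)" by simp
  also have "\<dots> \<le> measure lebesgue I0 * (C * lam w)"
  proof (rule mult_right_mono)
    show "measure lebesgue K \<le> measure lebesgue I0"
      using KI0 I0_fin by (intro measure_mono_fmeasurable) (auto simp: fmeasurable_def)
    show "0 \<le> C * lam w" using Cpos lam_nn KI0 w by auto
  qed
  finally show ?thesis using Cpos I0_measure_pos by (simp add: divide_le_eq mult.commute mult.left_commute)
qed

lemma anc_idx: "k' \<le> k \<Longrightarrow> anc k' k (idx p k x) = idx p k' x"
  unfolding anc_def using idx_anc by simp

lemma int_const_par: "integral\<^sup>L lebesgue (\<lambda>x. indicator (par p k n) x * c) = vol k * c"
  using measure_par_leb by simp

lemma good:
  assumes rk: "r \<le> k" and n: "n \<in> Ch r k nI"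
    and nf: "\<forall>k'. r \<le> k' \<and> k' < k \<longrightarrow> \<not> stop k' (anc k' k n)"
  shows "\<not> bad k n"
proof
  assume b: "bad k n"
  obtain z where z: "P_irrational p z" "idx p k z = n" using exists_irr by blast
  have zk: "z \<in> par p k n" using par_idx[of z k] z(2) by simp
  have zI0: "z \<in> I0" using par_I[OF n rk] zk by auto
  obtain s where sF: "par p s (idx p s z) \<in> F" using piece[OF z(1) zI0] .
  show False
  proof (cases "k \<le> s")
    case True
    have "par p s (idx p s z) \<subseteq> par p k n" using par_idx_mono[OF True, of z] z(2) by simp
    then have sub: "par p s (idx p s z) \<subseteq> G" using b unfolding bad_def by auto
    have "\<delta> \<le> integral\<^sup>L lebesgue (\<lambda>x. indicator (par p s (idx p s z)) x * lam x)" using delta sF by simp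
    also have "\<dots> \<le> integral\<^sup>L lebesgue (\<lambda>x. indicator G x * lam x)"
      by (rule int_mono_lam) (use sub G_sub in auto)
    finally show False using small1 by simp
  next
    case False
    show False
    proof (cases "k = r")
      case True
      then have nn: "n = nI" using n Ch_self by simp
      have sub: "par p r nI \<subseteq> par p s (idx p s z)"
        using par_idx_mono[of s r z] False True z(2) nn by simp
      have low: "\<And>w. w \<in> par p r nI \<Longrightarrow> \<delta> / (C * measure lebesgue I0) \<le> lam w"
        using lam_lower[OF sF] sub by blast
      have subG: "par p r nI \<subseteq> G" using b True nn unfolding bad_def by simp
      have "vol r * (\<delta> / (C * measure lebesgue I0))
          = integral\<^sup>L lebesgue (\<lambda>x. indicator (par p r nI) x * (\<delta> / (C * measure lebesgue I0)))"
        by (rule int_const_par[symmetric])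
      also have "\<dots> \<le> integral\<^sup>L lebesgue (\<lambda>x. indicator (par p r nI) x * lam x)"
      proof (rule integral_mono)
        show "integrable lebesgue (\<lambda>x. indicator (par p r nI) x * (\<delta> / (C * measure lebesgue I0)))"
          using emeasure_par_fin by (intro integrable_mult_left integrable_real_indicator) auto
        show "integrable lebesgue (\<lambda>x. indicator (par p r nI) x * lam x)"
          using lam_int IsubI0 by simp
        show "\<And>x. x \<in> space lebesgue \<Longrightarrow> indicator (par p r nI) x * (\<delta> / (C * measure lebesgue I0))
             \<le> indicator (par p r nI) x * lam x"
          using low by (auto simp: indicator_def)
      qed
      also have "\<dots> \<le> integral\<^sup>L lebesgue (\<lambda>x. indicator G x * lam x)"
        by (rule int_mono_lam) (use subG G_sub in auto)
      finally show False using small2 by (simp add: mult.commute)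
    next
      case False2: False
      define k' where "k' = k - 1"
      have kk: "k = Suc k'" "r \<le> k'" "s \<le> k'" using False False2 rk unfolding k'_def by auto
      have a: "anc k' k n = idx p k' z" using anc_idx[of k' k z] z(2) kk by simp
      have "inpc k' (idx p k' z)"
        unfolding inpc_def using par_idx_mono[OF kk(3), of z] sF by blast
      moreover have "n \<in> Ch k' (Suc k') (idx p k' z)"
        using idx_Ch[of k' "Suc k'" z "idx p k' z"] z(2) kk by simp
      ultimately have "stop k' (anc k' k n)"
        unfolding stop_def a using b kk by auto
      then show False using nf kk by auto
    qed
  qed
qed

lemma maxbound:
  assumes y: "y \<in> I0" "y \<notin> G" "y \<in> par p k n"
  shows "cmod (Psi (par p k n)) \<le> lam y * vol k"
proof -
  have "P_maximal p Psi y \<le> ereal (lam y)" using y unfolding G_def by auto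
  moreover have "ereal (cmod (Psi (par p k n)) / mu (par p k n)) \<le> P_maximal p Psi y"
    unfolding P_maximal_def using y(3) par_Lambda by (intro SUP_upper) auto
  ultimately have "cmod (Psi (par p k n)) / vol k \<le> lam y"
    using mu_par by (metis ereal_less_eq(3) order.trans)
  then show ?thesis using vol_pos[of k] by (simp add: divide_le_eq)
qed

lemma free_bound:
  assumes rk: "r \<le> k" and x: "idx p r x = nI" and f: "free k x"
  shows "\<exists>y\<in>par p k (idx p k x). y \<in> I0 \<and> y \<notin> G \<and> cmod (gg Psi k x) \<le> lam y"
proof -
  have n: "idx p k x \<in> Ch r k nI" using idx_Ch[OF rk] x by simp
  have "\<not> bad k (idx p k x)"
  proof (rule good[OF rk n], intro allI impI)
    fix k' assume "r \<le> k' \<and> k' < k"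
    then show "\<not> stop k' (anc k' k (idx p k x))" using f anc_idx[of k' k x] unfolding free_def by simp
  qed
  then obtain y where y: "y \<in> par p k (idx p k x)" "y \<notin> G" unfolding bad_def by auto
  have yI0: "y \<in> I0" using par_I[OF n rk] y by auto
  have "cmod (Psi (par p k (idx p k x))) \<le> lam y * vol k" using maxbound[OF yI0 y(2) y(1)] .
  then have "cmod (gg Psi k x) \<le> lam y"
    unfolding gg_def using vol_pos[of k] by (simp add: norm_divide divide_le_eq)
  then show ?thesis using y yI0 by blast
qed

lemma SS_finite: "finite (SS k)"
proof (rule finite_subset)
  show "SS k \<subseteq> Sigma {r..<k} (\<lambda>k'. Ch r k' nI)" unfolding SS_def by auto
  show "finite (Sigma {r..<k} (\<lambda>k'. Ch r k' nI))" using Ch_finite by (intro finite_SigmaI) auto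
qed

lemma SS_unique:
  assumes S1: "(a, n1) \<in> SS k1" and S2: "(b, n2) \<in> SS k2"
    and x: "idx p a x = n1" "idx p b x = n2"
  shows "a = b \<and> n1 = n2"
proof -
  have *: False if "(a, n1) \<in> SS k1" "(b, n2) \<in> SS k2" "idx p a x = n1" "idx p b x = n2" "a < b"
    for a b n1 n2 k1 k2
  proof -
    have "r \<le> a" "stop a n1" using that(1) unfolding SS_def by auto
    moreover have "\<not> stop a (anc a b n2)" using that(2,5) \<open>r \<le> a\<close> unfolding SS_def by auto
    moreover have "anc a b n2 = n1" using anc_idx[of a b x] that by simp
    ultimately show False by simp
  qed
  show ?thesis
  proof (cases a b rule: linorder_cases)
    case less then show ?thesis using *[OF S1 S2 x] by blast
  next
    case greater then show ?thesis using *[OF S2 S1 x(2) x(1)] by blast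
  next
    case equal then show ?thesis using x by simp
  qed
qed

lemma sum_single: "finite A \<Longrightarrow> a \<in> A \<Longrightarrow> (\<And>b. b \<in> A \<Longrightarrow> b \<noteq> a \<Longrightarrow> f b = 0) \<Longrightarrow> sum f A = (f a :: real)"
  by (simp add: sum.remove sum.neutral)

lemma decomp:
  assumes rk: "r \<le> k"
  shows "indicator (fib r nI) x = (if free k x then indicator (fib r nI) x else 0)
           + (\<Sum>S\<in>SS k. indicator (fib (fst S) (snd S)) x :: real)"
proof (cases "idx p r x = nI")
  case False
  have "(\<Sum>S\<in>SS k. indicator (fib (fst S) (snd S)) x :: real) = 0"
  proof (rule sum.neutral, safe)
    fix a n assume "(a, n) \<in> SS k"
    then have "r \<le> a" "n \<in> Ch r a nI" unfolding SS_def by auto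
    then show "indicator (fib (fst (a, n)) (snd (a, n))) x = (0::real)"
      using idx_Ch[of r a x nI] False by (auto simp: indicator_def)
  qed
  then show ?thesis using False by simp
next
  case True
  show ?thesis
  proof (cases "free k x")
    case fr: True
    have "(\<Sum>S\<in>SS k. indicator (fib (fst S) (snd S)) x :: real) = 0"
    proof (rule sum.neutral, safe)
      fix a n assume "(a, n) \<in> SS k"
      then have "r \<le> a" "a < k" "stop a n" unfolding SS_def by auto
      then show "indicator (fib (fst (a, n)) (snd (a, n))) x = (0::real)"
        using fr unfolding free_def by (auto simp: indicator_def)
    qed
    then show ?thesis using fr by simp
  next
    case nfr: False
    then have "\<exists>k'. r \<le> k' \<and> k' < k \<and> stop k' (idx p k' x)" unfolding free_def by auto
    then obtain k0 where k0: "r \<le> k0 \<and> k0 < k \<and> stop k0 (idx p k0 x)"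
      and min: "\<And>m. m < k0 \<Longrightarrow> \<not> (r \<le> m \<and> m < k \<and> stop m (idx p m x))"
      unfolding exists_least_iff[of "\<lambda>k'. r \<le> k' \<and> k' < k \<and> stop k' (idx p k' x)"] by blast
    have S0: "(k0, idx p k0 x) \<in> SS k"
      unfolding SS_def using k0 min idx_Ch[of r k0 x nI] True anc_idx[of _ k0 x] by auto
    have "(\<Sum>S\<in>SS k. indicator (fib (fst S) (snd S)) x :: real) = (\<lambda>S. indicator (fib (fst S) (snd S)) x) (k0, idx p k0 x)"
    proof (rule sum_single[OF SS_finite S0])
      fix b assume b: "b \<in> SS k" "b \<noteq> (k0, idx p k0 x)"
      obtain a n where ab: "b = (a, n)" by (cases b)
      have "idx p a x \<noteq> n"
      proof
        assume "idx p a x = n"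
        then have "a = k0 \<and> n = idx p k0 x"
          using SS_unique[of a n k k0 "idx p k0 x" k x] b(1) S0 ab by blast
        then show False using b(2) ab by simp
      qed
      then show "indicator (fib (fst b) (snd b)) x = (0::real)"
        using ab by (simp add: indicator_def)
    qed
    then show ?thesis using nfr True by simp
  qed
qed

definition cc :: "nat \<times> ('n \<Rightarrow> int) \<Rightarrow> ('n \<Rightarrow> int)" where
  "cc S = (SOME c. c \<in> Ch (fst S) (Suc (fst S)) (snd S) \<and> bad (Suc (fst S)) c)"

lemma cc_prop: assumes "(a, n) \<in> SS k"
  shows "cc (a, n) \<in> Ch a (Suc a) n" "bad (Suc a) (cc (a, n))"
proof -
  have "\<exists>c. c \<in> Ch a (Suc a) n \<and> bad (Suc a) c" using assms unfolding SS_def stop_def by auto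
  from someI_ex[OF this] have "cc (a, n) \<in> Ch a (Suc a) n \<and> bad (Suc a) (cc (a, n))"
    unfolding cc_def by simp
  then show "cc (a, n) \<in> Ch a (Suc a) n" "bad (Suc a) (cc (a, n))" by auto
qed

abbreviation intL :: "(real^'n) set \<Rightarrow> real" where
  "intL A \<equiv> integral\<^sup>L lebesgue (\<lambda>x. indicator A x * lam x)"

lemma intL_fib: "intL (fib k n) = intL (par p k n)"
proof (rule integral_cong_AE)
  show "(\<lambda>x. indicator (fib k n) x * lam x) \<in> borel_measurable lebesgue" by measurable
  show "(\<lambda>x. indicator (par p k n) x * lam x) \<in> borel_measurable lebesgue" by measurable
  show "AE x in lebesgue. indicator (fib k n) x * lam x = indicator (par p k n) x * lam x"
    using AE_par_fiber[of k n] by (rule AE_mp) (auto simp: indicator_def)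
qed

lemma lam_le_const_int:
  assumes A: "A \<in> sets lebesgue" "A \<subseteq> I0" "emeasure lebesgue A < \<infinity>"
    and le: "\<And>x. x \<in> A \<Longrightarrow> lam x \<le> c"
  shows "intL A \<le> measure lebesgue A * c"
proof -
  have "intL A \<le> integral\<^sup>L lebesgue (\<lambda>x. indicator A x * c)"
  proof (rule integral_mono)
    show "integrable lebesgue (\<lambda>x. indicator A x * lam x)" using lam_int A by simp
    show "integrable lebesgue (\<lambda>x. indicator A x * c)"
      using A by (intro integrable_mult_left integrable_real_indicator) auto
    show "\<And>x. x \<in> space lebesgue \<Longrightarrow> indicator A x * lam x \<le> indicator A x * c"
      using le by (auto simp: indicator_def)
  qed
  also have "\<dots> = measure lebesgue A * c" by simp
  finally show ?thesis .
qed

lemma const_le_lam_int: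
  assumes A: "A \<in> sets lebesgue" "A \<subseteq> I0" "emeasure lebesgue A < \<infinity>"
    and le: "\<And>x. x \<in> A \<Longrightarrow> c \<le> C * lam x"
  shows "measure lebesgue A * c \<le> C * intL A"
proof -
  have "measure lebesgue A * c = integral\<^sup>L lebesgue (\<lambda>x. indicator A x * c)" by simp
  also have "\<dots> \<le> integral\<^sup>L lebesgue (\<lambda>x. C * (indicator A x * lam x))"
  proof (rule integral_mono)
    show "integrable lebesgue (\<lambda>x. C * (indicator A x * lam x))" using lam_int A by simp
    show "integrable lebesgue (\<lambda>x. indicator A x * c)"
      using A by (intro integrable_mult_left integrable_real_indicator) auto
    show "\<And>x. x \<in> space lebesgue \<Longrightarrow> indicator A x * c \<le> C * (indicator A x * lam x)"
      using le by (auto simp: indicator_def)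
  qed
  also have "\<dots> = C * intL A" by simp
  finally show ?thesis .
qed

lemma S_bound:
  assumes S: "(a, n) \<in> SS k"
  shows "cmod (Psi (par p a n)) + intL (par p a n)
           \<le> (C + C * C) * real B ^ CARD('n) * intL (par p (Suc a) (cc (a, n)))"
proof -
  have ra: "r \<le> a" and nCh: "n \<in> Ch r a nI" and st: "stop a n"
    and mn: "\<forall>k''. r \<le> k'' \<and> k'' < a \<longrightarrow> \<not> stop k'' (anc k'' a n)"
    using S unfolding SS_def by auto
  have "\<not> bad a n" using good[OF ra nCh mn] .
  then obtain y where y: "y \<in> par p a n" "y \<notin> G" unfolding bad_def by auto
  have parI0: "par p a n \<subseteq> I0" using par_I[OF nCh ra] .
  then have yI0: "y \<in> I0" using y by auto
  obtain K where K: "K \<in> F" "par p a n \<subseteq> K" using st unfolding stop_def inpc_def by auto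
  define c where "c = cc (a, n)"
  have cCh: "c \<in> Ch a (Suc a) n" using cc_prop[OF S] unfolding c_def by simp
  have csub: "par p (Suc a) c \<subseteq> par p a n" using Ch_sub[OF _ cCh] by simp
  have ly: "0 \<le> lam y" using lam_nn yI0 by simp
  have h1: "cmod (Psi (par p a n)) \<le> lam y * vol a" using maxbound[OF yI0 y(2) y(1)] .
  have h2: "vol a \<le> real B ^ CARD('n) * vol (Suc a)" using vol_le pB by blast
  have h3: "vol (Suc a) * lam y \<le> C * intL (par p (Suc a) c)"
  proof -
    have "measure lebesgue (par p (Suc a) c) * lam y \<le> C * intL (par p (Suc a) c)"
    proof (rule const_le_lam_int)
      fix x assume "x \<in> par p (Suc a) c"
      then show "lam y \<le> C * lam x" using csub K(2) y(1) ratio[OF K(1)] by blast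
    qed (use csub parI0 emeasure_par_fin in auto)
    then show ?thesis using measure_par_leb by simp
  qed
  have h4: "intL (par p a n) \<le> vol a * (C * lam y)"
  proof -
    have "intL (par p a n) \<le> measure lebesgue (par p a n) * (C * lam y)"
    proof (rule lam_le_const_int)
      fix x assume "x \<in> par p a n"
      then show "lam x \<le> C * lam y" using K(2) y(1) ratio[OF K(1)] by blast
    qed (use parI0 emeasure_par_fin in auto)
    then show ?thesis using measure_par_leb by simp
  qed
  define X where "X = intL (par p (Suc a) c)"
  define D where "D = real B ^ CARD('n)"
  have D0: "0 \<le> D" unfolding D_def by simp
  have "lam y * vol a \<le> lam y * (D * vol (Suc a))" using mult_left_mono[OF h2 ly] unfolding D_def .
  also have "\<dots> = D * (vol (Suc a) * lam y)" by simp
  also have "\<dots> \<le> D * (C * X)" using mult_left_mono[OF h3 D0] unfolding X_def .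
  finally have A1: "lam y * vol a \<le> D * (C * X)" .
  have "vol a * (C * lam y) = C * (lam y * vol a)" by simp
  also have "\<dots> \<le> C * (D * (C * X))" using A1 Cpos by simp
  finally have A2: "vol a * (C * lam y) \<le> C * (D * (C * X))" .
  have "cmod (Psi (par p a n)) + intL (par p a n) \<le> D * (C * X) + C * (D * (C * X))"
    using h1 h4 A1 A2 by linarith
  also have "\<dots> = (C + C * C) * D * X" by (simp add: algebra_simps)
  finally show ?thesis unfolding X_def D_def c_def .
qed

lemma sum_S_bound: "(\<Sum>S\<in>SS k. intL (par p (Suc (fst S)) (cc S))) \<le> intL G"
proof -
  have ch: "\<And>S. S \<in> SS k \<Longrightarrow> cc S \<in> Ch (fst S) (Suc (fst S)) (snd S) \<and> fst S \<ge> r \<and> snd S \<in> Ch r (fst S) nI"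
    using cc_prop unfolding SS_def by auto
  have sub: "\<And>S. S \<in> SS k \<Longrightarrow> par p (Suc (fst S)) (cc S) \<subseteq> I0"
    using ch par_I Ch_sub by (meson Suc_n_not_le_n nat_le_linear order.trans)
  have "(\<Sum>S\<in>SS k. intL (par p (Suc (fst S)) (cc S))) = (\<Sum>S\<in>SS k. intL (fib (Suc (fst S)) (cc S)))"
    using intL_fib by simp
  also have "\<dots> = integral\<^sup>L lebesgue (\<lambda>x. \<Sum>S\<in>SS k. indicator (fib (Suc (fst S)) (cc S)) x * lam x)"
  proof (rule Bochner_Integration.integral_sum[symmetric])
    fix S assume "S \<in> SS k"
    have "integrable lebesgue (\<lambda>x. indicator (par p (Suc (fst S)) (cc S)) x * lam x)"
      using lam_int sub \<open>S \<in> SS k\<close> by simp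
    then show "integrable lebesgue (\<lambda>x. indicator (fib (Suc (fst S)) (cc S)) x * lam x)"
    proof (rule integrable_cong_AE_imp)
      show "(\<lambda>x. indicator (fib (Suc (fst S)) (cc S)) x * lam x) \<in> borel_measurable lebesgue" by measurable
      show "AE x in lebesgue. indicator (par p (Suc (fst S)) (cc S)) x * lam x = indicator (fib (Suc (fst S)) (cc S)) x * lam x"
        using AE_par_fiber by (rule AE_mp) (auto simp: indicator_def)
    qed
  qed
  also have "\<dots> \<le> intL G"
  proof (rule integral_mono)
    show "integrable lebesgue (\<lambda>x. \<Sum>S\<in>SS k. indicator (fib (Suc (fst S)) (cc S)) x * lam x)"
    proof (rule Bochner_Integration.integrable_sum)
      fix S assume "S \<in> SS k"
      have "integrable lebesgue (\<lambda>x. indicator (par p (Suc (fst S)) (cc S)) x * lam x)"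
        using lam_int sub \<open>S \<in> SS k\<close> by simp
      then show "integrable lebesgue (\<lambda>x. indicator (fib (Suc (fst S)) (cc S)) x * lam x)"
      proof (rule integrable_cong_AE_imp)
        show "(\<lambda>x. indicator (fib (Suc (fst S)) (cc S)) x * lam x) \<in> borel_measurable lebesgue" by measurable
        show "AE x in lebesgue. indicator (par p (Suc (fst S)) (cc S)) x * lam x = indicator (fib (Suc (fst S)) (cc S)) x * lam x"
          using AE_par_fiber by (rule AE_mp) (auto simp: indicator_def)
      qed
    qed
    show "integrable lebesgue (\<lambda>x. indicator G x * lam x)" using lam_int G_sub by simp
    fix x
    show "(\<Sum>S\<in>SS k. indicator (fib (Suc (fst S)) (cc S)) x * lam x) \<le> indicator G x * lam x"
    proof (cases "\<exists>S\<in>SS k. idx p (Suc (fst S)) x = cc S")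
      case False
      then have "(\<Sum>S\<in>SS k. indicator (fib (Suc (fst S)) (cc S)) x * lam x) = 0"
        by (intro sum.neutral) (auto simp: indicator_def)
      moreover have "0 \<le> indicator G x * lam x" using G_sub lam_nn by (auto simp: indicator_def)
      ultimately show ?thesis by simp
    next
      case True
      then obtain S0 where S0: "S0 \<in> SS k" "idx p (Suc (fst S0)) x = cc S0" by blast
      have xS0: "idx p (fst S0) x = snd S0"
        using idx_Ch[of "fst S0" "Suc (fst S0)" x "snd S0"] ch[OF S0(1)] S0(2) by simp
      have "(\<Sum>S\<in>SS k. indicator (fib (Suc (fst S)) (cc S)) x * lam x)
          = (\<lambda>S. indicator (fib (Suc (fst S)) (cc S)) x * lam x) S0"
      proof (rule sum_single[OF SS_finite S0(1)])
        fix b assume b: "b \<in> SS k" "b \<noteq> S0"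
        show "indicator (fib (Suc (fst b)) (cc b)) x * lam x = 0"
        proof (cases "idx p (Suc (fst b)) x = cc b")
          case True
          then have xb: "idx p (fst b) x = snd b"
            using idx_Ch[of "fst b" "Suc (fst b)" x "snd b"] ch[OF b(1)] by simp
          have "fst b = fst S0 \<and> snd b = snd S0"
            using SS_unique[of "fst b" "snd b" k "fst S0" "snd S0" k x] b(1) S0(1) xb xS0 by simp
          then show ?thesis using b(2) by (simp add: prod_eq_iff)
        qed (simp add: indicator_def)
      qed
      also have "\<dots> = lam x" using S0 by (simp add: indicator_def)
      also have "\<dots> = indicator G x * lam x"
      proof -
        have "x \<in> par p (Suc (fst S0)) (cc S0)" using par_idx[of x "Suc (fst S0)"] S0(2) by simp
        moreover have "bad (Suc (fst S0)) (cc S0)" using cc_prop[of "fst S0" "snd S0" k] S0(1) by simp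
        ultimately show ?thesis unfolding bad_def by (auto simp: indicator_def)
      qed
      finally show ?thesis by simp
    qed
  qed
  finally show ?thesis .
qed

lemma fib_sub_par: "fib k n \<subseteq> par p k n"
  using par_idx by auto

lemma D_meas[measurable]: "P_deriv p Psi \<in> borel_measurable lebesgue"
  using P_deriv_meas[OF dexists] .

lemma TT_meas[measurable]: "TT \<in> borel_measurable lebesgue"
  unfolding TT_def trunc_def by measurable

lemma TT_bound: "x \<in> I0 \<Longrightarrow> cmod (TT x) \<le> lam x"
  unfolding TT_def trunc_def using lam_nn by auto

lemma TT_int: "A \<in> sets lebesgue \<Longrightarrow> A \<subseteq> I0 \<Longrightarrow> integrable lebesgue (\<lambda>x. indicator A x *\<^sub>R TT x)"
proof (rule Bochner_Integration.integrable_bound)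
  show "integrable lebesgue (\<lambda>x. \<Lambda> * indicator I0 x)"
    using I0_fin by (intro integrable_mult_right integrable_real_indicator) auto
  assume "A \<in> sets lebesgue" "A \<subseteq> I0"
  then show "(\<lambda>x. indicator A x *\<^sub>R TT x) \<in> borel_measurable lebesgue" by measurable
  show "AE x in lebesgue. norm (indicator A x *\<^sub>R TT x) \<le> norm (\<Lambda> * indicator I0 x)"
  proof (rule AE_I2)
    fix x show "norm (indicator A x *\<^sub>R TT x) \<le> norm (\<Lambda> * indicator I0 x)"
    proof (cases "x \<in> A")
      case True then have "x \<in> I0" using \<open>A \<subseteq> I0\<close> by auto
      then show ?thesis using True TT_bound[of x] lam_bdd[of x] Lam_nn by (simp add: indicator_def)
    qed (use Lam_nn in \<open>simp add: indicator_def\<close>)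
  qed
qed

lemma TT_int_bound: "A \<in> sets lebesgue \<Longrightarrow> A \<subseteq> I0 \<Longrightarrow> cmod (integral\<^sup>L lebesgue (\<lambda>x. indicator A x *\<^sub>R TT x)) \<le> intL A"
proof -
  assume A: "A \<in> sets lebesgue" "A \<subseteq> I0"
  have "cmod (integral\<^sup>L lebesgue (\<lambda>x. indicator A x *\<^sub>R TT x)) \<le> integral\<^sup>L lebesgue (\<lambda>x. norm (indicator A x *\<^sub>R TT x))"
    by (rule integral_norm_bound)
  also have "\<dots> \<le> intL A"
  proof (rule integral_mono)
    show "integrable lebesgue (\<lambda>x. norm (indicator A x *\<^sub>R TT x))" by (rule integrable_norm[OF TT_int[OF A]])
    show "integrable lebesgue (\<lambda>x. indicator A x * lam x)" using lam_int[OF A] .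
    show "\<And>x. x \<in> space lebesgue \<Longrightarrow> norm (indicator A x *\<^sub>R TT x) \<le> indicator A x * lam x"
      using A TT_bound by (auto simp: indicator_def)
  qed
  finally show ?thesis .
qed

lemma fib_I0: "r \<le> a \<Longrightarrow> n \<in> Ch r a nI \<Longrightarrow> fib a n \<subseteq> I0"
  using fib_sub_par par_I by blast

lemma fibI_I0: "fib r nI \<subseteq> I0"
  using fib_sub_par IsubI0 by blast

lemma decomp_int:
  fixes f :: "real^'n \<Rightarrow> complex"
  assumes rk: "r \<le> k" and iI: "integrable lebesgue (\<lambda>x. indicator (fib r nI) x *\<^sub>R f x)"
    and iS: "\<And>S. S \<in> SS k \<Longrightarrow> integrable lebesgue (\<lambda>x. indicator (fib (fst S) (snd S)) x *\<^sub>R f x)"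
  shows "integrable lebesgue (\<lambda>x. (if free k x then indicator (fib r nI) x else 0) *\<^sub>R f x)"
    and "integral\<^sup>L lebesgue (\<lambda>x. indicator (fib r nI) x *\<^sub>R f x)
       = integral\<^sup>L lebesgue (\<lambda>x. (if free k x then indicator (fib r nI) x else 0) *\<^sub>R f x)
         + (\<Sum>S\<in>SS k. integral\<^sup>L lebesgue (\<lambda>x. indicator (fib (fst S) (snd S)) x *\<^sub>R f x))"
proof -
  have pw: "\<And>x. (if free k x then indicator (fib r nI) x else 0) *\<^sub>R f x
      = indicator (fib r nI) x *\<^sub>R f x - (\<Sum>S\<in>SS k. indicator (fib (fst S) (snd S)) x *\<^sub>R f x)"
  proof -
    fix x
    have e: "indicator (fib r nI) x *\<^sub>R f x = ((if free k x then indicator (fib r nI) x else 0)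
           + (\<Sum>S\<in>SS k. indicator (fib (fst S) (snd S)) x :: real)) *\<^sub>R f x"
      by (rule arg_cong[where f="\<lambda>t. t *\<^sub>R f x", OF decomp[OF rk, of x]])
    have "indicator (fib r nI) x *\<^sub>R f x = (if free k x then indicator (fib r nI) x else 0) *\<^sub>R f x
           + (\<Sum>S\<in>SS k. indicator (fib (fst S) (snd S)) x *\<^sub>R f x)"
      unfolding e by (simp only: scaleR_add_left scaleR_sum_left)
    then show "(if free k x then indicator (fib r nI) x else 0) *\<^sub>R f x
      = indicator (fib r nI) x *\<^sub>R f x - (\<Sum>S\<in>SS k. indicator (fib (fst S) (snd S)) x *\<^sub>R f x)"
      by (simp only: eq_diff_eq)
  qed
  have iSum: "integrable lebesgue (\<lambda>x. \<Sum>S\<in>SS k. indicator (fib (fst S) (snd S)) x *\<^sub>R f x)"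
    by (rule Bochner_Integration.integrable_sum) (rule iS)
  show i1: "integrable lebesgue (\<lambda>x. (if free k x then indicator (fib r nI) x else 0) *\<^sub>R f x)"
    unfolding pw by (rule Bochner_Integration.integrable_diff[OF iI iSum])
  have "integral\<^sup>L lebesgue (\<lambda>x. (if free k x then indicator (fib r nI) x else 0) *\<^sub>R f x)
     = integral\<^sup>L lebesgue (\<lambda>x. indicator (fib r nI) x *\<^sub>R f x)
       - integral\<^sup>L lebesgue (\<lambda>x. \<Sum>S\<in>SS k. indicator (fib (fst S) (snd S)) x *\<^sub>R f x)"
    unfolding pw by (rule Bochner_Integration.integral_diff[OF iI iSum])
  also have "integral\<^sup>L lebesgue (\<lambda>x. \<Sum>S\<in>SS k. indicator (fib (fst S) (snd S)) x *\<^sub>R f x)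
     = (\<Sum>S\<in>SS k. integral\<^sup>L lebesgue (\<lambda>x. indicator (fib (fst S) (snd S)) x *\<^sub>R f x))"
    by (rule Bochner_Integration.integral_sum) (rule iS)
  finally show "integral\<^sup>L lebesgue (\<lambda>x. indicator (fib r nI) x *\<^sub>R f x)
       = integral\<^sup>L lebesgue (\<lambda>x. (if free k x then indicator (fib r nI) x else 0) *\<^sub>R f x)
         + (\<Sum>S\<in>SS k. integral\<^sup>L lebesgue (\<lambda>x. indicator (fib (fst S) (snd S)) x *\<^sub>R f x))"
    by simp
qed

lemma SS_props: "S \<in> SS k \<Longrightarrow> r \<le> fst S \<and> fst S < k \<and> snd S \<in> Ch r (fst S) nI"
  unfolding SS_def by auto

lemma alg4: "(P::complex) = a + s \<Longrightarrow> t = b + u \<Longrightarrow> c = a - b \<Longrightarrow> d = s - u \<Longrightarrow> P - t = c + d"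
  by simp

lemma finite_bound:
  assumes rk: "r \<le> k"
  shows "cmod (Psi (par p r nI) - integral\<^sup>L lebesgue (\<lambda>x. indicator (fib r nI) x *\<^sub>R TT x))
     \<le> cmod (integral\<^sup>L lebesgue (\<lambda>x. (if free k x then indicator (fib r nI) x else 0) *\<^sub>R (gg Psi k x - TT x)))
       + (C + C * C) * real B ^ CARD('n) * intL G"
proof -
  let ?phi = "\<lambda>x. (if free k x then indicator (fib r nI) x else 0) :: real"
  have iSg: "integrable lebesgue (\<lambda>x. indicator (fib (fst S) (snd S)) x *\<^sub>R gg Psi k x)" if S: "S \<in> SS k" for S
  proof -
    have "fst S \<le> k" using SS_props[OF S] by simp
    then show ?thesis by (rule KI(1)[OF add])
  qed
  have iST: "integrable lebesgue (\<lambda>x. indicator (fib (fst S) (snd S)) x *\<^sub>R TT x)" if S: "S \<in> SS k" for S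
    using SS_props[OF S] by (intro TT_int fiber_sets_leb fib_I0) auto
  have iIg: "integrable lebesgue (\<lambda>x. indicator (fib r nI) x *\<^sub>R gg Psi k x)" using KI(1)[OF add rk] .
  have iIT: "integrable lebesgue (\<lambda>x. indicator (fib r nI) x *\<^sub>R TT x)" using TT_int fibI_I0 by simp
  note dg = decomp_int[OF rk iIg iSg] and dT = decomp_int[OF rk iIT iST]
  have eg: "Psi (par p r nI) = integral\<^sup>L lebesgue (\<lambda>x. ?phi x *\<^sub>R gg Psi k x)
       + (\<Sum>S\<in>SS k. Psi (par p (fst S) (snd S)))"
  proof -
    have "Psi (par p r nI) = integral\<^sup>L lebesgue (\<lambda>x. indicator (fib r nI) x *\<^sub>R gg Psi k x)"
      using KI(2)[OF add rk] by simp
    also have "\<dots> = integral\<^sup>L lebesgue (\<lambda>x. ?phi x *\<^sub>R gg Psi k x)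
       + (\<Sum>S\<in>SS k. integral\<^sup>L lebesgue (\<lambda>x. indicator (fib (fst S) (snd S)) x *\<^sub>R gg Psi k x))"
      using dg(2) .
    also have "(\<Sum>S\<in>SS k. integral\<^sup>L lebesgue (\<lambda>x. indicator (fib (fst S) (snd S)) x *\<^sub>R gg Psi k x))
        = (\<Sum>S\<in>SS k. Psi (par p (fst S) (snd S)))"
    proof (rule sum.cong[OF refl])
      fix S assume S: "S \<in> SS k"
      have "fst S \<le> k" using SS_props[OF S] by simp
      then show "integral\<^sup>L lebesgue (\<lambda>x. indicator (fib (fst S) (snd S)) x *\<^sub>R gg Psi k x) = Psi (par p (fst S) (snd S))"
        by (rule KI(2)[OF add])
    qed
    finally show ?thesis .
  qed
  have diff: "Psi (par p r nI) - integral\<^sup>L lebesgue (\<lambda>x. indicator (fib r nI) x *\<^sub>R TT x)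
      = integral\<^sup>L lebesgue (\<lambda>x. ?phi x *\<^sub>R (gg Psi k x - TT x))
        + (\<Sum>S\<in>SS k. Psi (par p (fst S) (snd S)) - integral\<^sup>L lebesgue (\<lambda>x. indicator (fib (fst S) (snd S)) x *\<^sub>R TT x))"
  proof -
    have c1: "integral\<^sup>L lebesgue (\<lambda>x. ?phi x *\<^sub>R (gg Psi k x - TT x))
       = integral\<^sup>L lebesgue (\<lambda>x. ?phi x *\<^sub>R gg Psi k x) - integral\<^sup>L lebesgue (\<lambda>x. ?phi x *\<^sub>R TT x)"
      using Bochner_Integration.integral_diff[OF dg(1) dT(1)] by (simp add: scaleR_diff_right)
    have c2: "(\<Sum>S\<in>SS k. Psi (par p (fst S) (snd S)) - integral\<^sup>L lebesgue (\<lambda>x. indicator (fib (fst S) (snd S)) x *\<^sub>R TT x))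
      = (\<Sum>S\<in>SS k. Psi (par p (fst S) (snd S))) - (\<Sum>S\<in>SS k. integral\<^sup>L lebesgue (\<lambda>x. indicator (fib (fst S) (snd S)) x *\<^sub>R TT x))"
      by (rule sum_subtractf)
    show ?thesis by (rule alg4[OF eg dT(2) c1 c2])
  qed
  have "cmod (Psi (par p r nI) - integral\<^sup>L lebesgue (\<lambda>x. indicator (fib r nI) x *\<^sub>R TT x))
      \<le> cmod (integral\<^sup>L lebesgue (\<lambda>x. ?phi x *\<^sub>R (gg Psi k x - TT x)))
        + (\<Sum>S\<in>SS k. cmod (Psi (par p (fst S) (snd S)) - integral\<^sup>L lebesgue (\<lambda>x. indicator (fib (fst S) (snd S)) x *\<^sub>R TT x)))"
    unfolding diff by (rule order.trans[OF norm_triangle_ineq add_left_mono[OF norm_sum]])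
  also have "(\<Sum>S\<in>SS k. cmod (Psi (par p (fst S) (snd S)) - integral\<^sup>L lebesgue (\<lambda>x. indicator (fib (fst S) (snd S)) x *\<^sub>R TT x)))
      \<le> (\<Sum>S\<in>SS k. (C + C * C) * real B ^ CARD('n) * intL (par p (Suc (fst S)) (cc S)))"
  proof (rule sum_mono)
    fix S assume S: "S \<in> SS k"
    obtain a n where an: "S = (a, n)" by (cases S)
    have "cmod (Psi (par p a n) - integral\<^sup>L lebesgue (\<lambda>x. indicator (fib a n) x *\<^sub>R TT x))
        \<le> cmod (Psi (par p a n)) + cmod (integral\<^sup>L lebesgue (\<lambda>x. indicator (fib a n) x *\<^sub>R TT x))"
      by (rule norm_triangle_ineq4)
    also have "cmod (integral\<^sup>L lebesgue (\<lambda>x. indicator (fib a n) x *\<^sub>R TT x)) \<le> intL (fib a n)"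
      using TT_int_bound fib_I0 SS_props[OF S] an by simp
    also have "intL (fib a n) = intL (par p a n)" by (rule intL_fib)
    also have "cmod (Psi (par p a n)) + intL (par p a n)
        \<le> (C + C * C) * real B ^ CARD('n) * intL (par p (Suc a) (cc (a, n)))"
      using S_bound S an by simp
    finally show "cmod (Psi (par p (fst S) (snd S)) - integral\<^sup>L lebesgue (\<lambda>x. indicator (fib (fst S) (snd S)) x *\<^sub>R TT x))
      \<le> (C + C * C) * real B ^ CARD('n) * intL (par p (Suc (fst S)) (cc S))"
      using an by simp
  qed
  also have "\<dots> = (C + C * C) * real B ^ CARD('n) * (\<Sum>S\<in>SS k. intL (par p (Suc (fst S)) (cc S)))"
    by (simp add: sum_distrib_left)
  also have "\<dots> \<le> (C + C * C) * real B ^ CARD('n) * intL G"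
    using sum_S_bound Cpos by (intro mult_left_mono) auto
  finally show ?thesis by simp
qed

lemma stop_pred[measurable]: "Measurable.pred lebesgue (\<lambda>x. stop k' (idx p k' x))"
proof -
  have "(\<lambda>n. stop k' n) \<in> count_space UNIV \<rightarrow>\<^sub>M count_space UNIV" by simp
  from measurable_compose[OF idx_meas this] show ?thesis unfolding pred_def by (simp add: comp_def)
qed

lemma free_pred[measurable]: "Measurable.pred lebesgue (free k)"
  unfolding free_def by measurable

lemma free_mono: "free k x \<Longrightarrow> k0 \<le> k \<Longrightarrow> free k0 x"
  unfolding free_def by auto

lemma f_bound:
  assumes de: "P_deriv_exists p Psi x" and ir: "P_irrational p x"
  shows "norm ((if (\<forall>k. free k x) then indicator (fib r nI) x else 0) *\<^sub>R (P_deriv p Psi x - TT x))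
          \<le> C * (indicator G x * lam x)"
proof -
  have rhs: "0 \<le> C * (indicator G x * lam x)" using G_sub lam_nn Cpos by (auto simp: indicator_def)
  show ?thesis
  proof (cases "(\<forall>k. free k x) \<and> idx p r x = nI")
    case False
    then show ?thesis using rhs by (auto simp: indicator_def)
  next
    case True
    then have fr: "\<And>k. free k x" and xI: "idx p r x = nI" by auto
    have xI0: "x \<in> I0" using fibI_I0 xI by auto
    define Dx where "Dx = P_deriv p Psi x"
    have gl: "(\<lambda>k. gg Psi k x) \<longlonglongrightarrow> Dx" using P_deriv_lim[OF de] unfolding Dx_def .
    show ?thesis
    proof (cases "cmod Dx \<le> lam x")
      case True
      then show ?thesis using rhs by (simp add: TT_def trunc_def Dx_def)
    next
      case False
      then have TT0: "TT x = 0" by (simp add: TT_def trunc_def Dx_def)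
      have nl: "(\<lambda>k. cmod (gg Psi k x)) \<longlonglongrightarrow> cmod Dx" using tendsto_norm[OF gl] .
      have "eventually (\<lambda>k. lam x < cmod (gg Psi k x)) sequentially"
        using order_tendstoD(1)[OF nl] False by simp
      then obtain k where k: "lam x < cmod (gg Psi k x)" by (auto simp: eventually_sequentially)
      have "ereal (cmod (Psi (par p k (idx p k x))) / mu (par p k (idx p k x))) \<le> P_maximal p Psi x"
        unfolding P_maximal_def using par_idx[of x k] par_Lambda by (intro SUP_upper) auto
      moreover have "cmod (Psi (par p k (idx p k x))) / mu (par p k (idx p k x)) = cmod (gg Psi k x)"
        unfolding gg_def mu_par using vol_pos[of k] by (simp add: norm_divide)
      ultimately have le: "ereal (cmod (gg Psi k x)) \<le> P_maximal p Psi x" by simp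
      have "ereal (lam x) < ereal (cmod (gg Psi k x))" using k by simp
      then have "ereal (lam x) < P_maximal p Psi x" using le by (rule order_less_le_trans)
      then have xG: "x \<in> G" unfolding G_def using xI0 by simp
      obtain s where sF: "par p s (idx p s x) \<in> F" using piece[OF ir xI0] .
      have "\<forall>k\<ge>max s r. cmod (gg Psi k x) \<le> C * lam x"
      proof (intro allI impI)
        fix k assume "max s r \<le> k"
        then have sk: "s \<le> k" and rk: "r \<le> k" by auto
        obtain y where y: "y \<in> par p k (idx p k x)" "cmod (gg Psi k x) \<le> lam y"
          using free_bound[OF rk xI fr] by blast
        have "y \<in> par p s (idx p s x)" using par_idx_mono[OF sk] y(1) by blast
        moreover have "x \<in> par p s (idx p s x)" by (rule par_idx)
        ultimately have "lam y \<le> C * lam x" using ratio[OF sF] by blast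
        then show "cmod (gg Psi k x) \<le> C * lam x" using y(2) by simp
      qed
      then have "cmod Dx \<le> C * lam x" by (intro LIMSEQ_le_const2[OF nl]) blast
      then show ?thesis using TT0 fr xI xG by (simp add: indicator_def Dx_def)
    qed
  qed
qed

lemma main_est:
  "cmod (Psi (par p r nI) - integral\<^sup>L lebesgue (\<lambda>x. indicator (fib r nI) x *\<^sub>R TT x))
     \<le> ((C + C * C) * real B ^ CARD('n) + C) * intL G"
proof -
  define s where "s i x = (if free (i+r) x then indicator (fib r nI) x else 0) *\<^sub>R (gg Psi (i+r) x - TT x)" for i x
  define f where "f x = (if (\<forall>k. free k x) then indicator (fib r nI) x else 0) *\<^sub>R (P_deriv p Psi x - TT x)" for x
  define w where "w x = 2 * \<Lambda> * indicator (par p r nI) x" for x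
  have fm: "f \<in> borel_measurable lebesgue" unfolding f_def by measurable
  have sm: "\<And>i. s i \<in> borel_measurable lebesgue" unfolding s_def by measurable
  have wi: "integrable lebesgue w" unfolding w_def
    using emeasure_par_fin by (intro integrable_mult_right integrable_real_indicator) auto
  have conv: "AE x in lebesgue. (\<lambda>i. s i x) \<longlonglongrightarrow> f x"
    using dexists
  proof (rule AE_mp, intro AE_I2 impI)
    fix x assume de: "P_deriv_exists p Psi x"
    have gl: "(\<lambda>i. gg Psi (i + r) x) \<longlonglongrightarrow> P_deriv p Psi x"
      using LIMSEQ_ignore_initial_segment[OF P_deriv_lim[OF de], of r] .
    show "(\<lambda>i. s i x) \<longlonglongrightarrow> f x"
    proof (cases "\<forall>k. free k x")
      case True
      then have "\<And>i. s i x = indicator (fib r nI) x *\<^sub>R (gg Psi (i + r) x - TT x)"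
        and "f x = indicator (fib r nI) x *\<^sub>R (P_deriv p Psi x - TT x)"
        unfolding s_def f_def by auto
      then show ?thesis using gl by (simp only:) (intro tendsto_intros)
    next
      case False
      then obtain k0 where k0: "\<not> free k0 x" by blast
      have "eventually (\<lambda>i. s i x = f x) sequentially"
        unfolding eventually_sequentially
      proof (intro exI allI impI)
        fix i assume "k0 \<le> i"
        then have "\<not> free (i + r) x" using k0 free_mono[of "i + r" x k0] by auto
        then show "s i x = f x" unfolding s_def f_def using False by auto
      qed
      then show ?thesis by (rule tendsto_eventually)
    qed
  qed
  have dom: "\<And>i. AE x in lebesgue. norm (s i x) \<le> w x"
  proof (intro AE_I2)
    fix i x
    show "norm (s i x) \<le> w x"
    proof (cases "free (i + r) x \<and> idx p r x = nI")
      case True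
      then have rk: "r \<le> i + r" and xI: "idx p r x = nI" and fr: "free (i + r) x" by auto
      obtain y where y: "y \<in> par p (i+r) (idx p (i+r) x)" "y \<in> I0" "cmod (gg Psi (i+r) x) \<le> lam y"
        using free_bound[OF rk xI fr] by blast
      have xp: "x \<in> par p r nI" using fib_sub_par xI by blast
      then have "x \<in> I0" using IsubI0 by blast
      then have "cmod (TT x) \<le> \<Lambda>" using TT_bound lam_bdd by (meson order.trans)
      moreover have "cmod (gg Psi (i+r) x) \<le> \<Lambda>" using y lam_bdd by (meson order.trans)
      ultimately have "cmod (gg Psi (i+r) x - TT x) \<le> 2 * \<Lambda>"
        using norm_triangle_ineq4[of "gg Psi (i+r) x" "TT x"] by simp
      then show ?thesis unfolding s_def w_def using True xp by simp
    next
      case False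
      then show ?thesis unfolding s_def w_def using Lam_nn by (auto simp: indicator_def)
    qed
  qed
  note D = integrable_dominated_convergence[OF fm sm wi conv dom] integrable_dominated_convergence2[OF fm sm wi conv dom]
    integral_dominated_convergence[OF fm sm wi conv dom]
  have fbound: "cmod (integral\<^sup>L lebesgue f) \<le> C * intL G"
  proof -
    have "cmod (integral\<^sup>L lebesgue f) \<le> integral\<^sup>L lebesgue (\<lambda>x. norm (f x))" by (rule integral_norm_bound)
    also have "\<dots> \<le> integral\<^sup>L lebesgue (\<lambda>x. C * (indicator G x * lam x))"
    proof (rule integral_mono_AE)
      show "integrable lebesgue (\<lambda>x. norm (f x))" using D(1) by (rule integrable_norm)
      show "integrable lebesgue (\<lambda>x. C * (indicator G x * lam x))" using lam_int G_sub by simp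
      show "AE x in lebesgue. norm (f x) \<le> C * (indicator G x * lam x)"
        using AE_conjI[OF dexists irr]
      proof (rule AE_mp, intro AE_I2 impI)
        fix x assume "P_deriv_exists p Psi x \<and> P_irrational p x"
        then show "norm (f x) \<le> C * (indicator G x * lam x)"
          unfolding f_def using f_bound by blast
      qed
    qed
    also have "\<dots> = C * intL G" by simp
    finally show ?thesis .
  qed
  let ?K1 = "(C + C * C) * real B ^ CARD('n)"
  have lim: "(\<lambda>i. cmod (integral\<^sup>L lebesgue (s i)) + ?K1 * intL G) \<longlonglongrightarrow> cmod (integral\<^sup>L lebesgue f) + ?K1 * intL G"
    by (intro tendsto_intros D(3))
  have "cmod (Psi (par p r nI) - integral\<^sup>L lebesgue (\<lambda>x. indicator (fib r nI) x *\<^sub>R TT x))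
      \<le> cmod (integral\<^sup>L lebesgue f) + ?K1 * intL G"
  proof (rule LIMSEQ_le_const[OF lim], intro exI allI impI)
    fix i :: nat
    show "cmod (Psi (par p r nI) - integral\<^sup>L lebesgue (\<lambda>x. indicator (fib r nI) x *\<^sub>R TT x))
      \<le> cmod (integral\<^sup>L lebesgue (s i)) + ?K1 * intL G"
      using finite_bound[of "i + r"] unfolding s_def by simp
  qed
  also have "\<dots> \<le> C * intL G + ?K1 * intL G" using fbound by simp
  finally show ?thesis by (simp add: algebra_simps)
qed

end



lemma countable_Lambda: "countable (Lambda (p :: 'n::finite \<Rightarrow> nat \<Rightarrow> nat))"
  unfolding Lambda_def Lambda_k_def by (intro countable_UN countable_image) auto

theorem theorem3:
  fixes p :: "'n::finite \<Rightarrow> nat \<Rightarrow> nat"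
    and Psi :: "(real^'n) set \<Rightarrow> complex"
    and I0 :: "(real^'n) set"
    and h :: "nat \<Rightarrow> real^'n \<Rightarrow> real"
  assumes p_ne1: "\<And>j i. i \<ge> 1 \<Longrightarrow> p j i \<ge> 1 \<and> p j i \<noteq> 1"
    and p_bdd: "\<exists>B. \<forall>j. \<forall>i\<ge>1. p j i \<le> B"
    and add: "additive_on_Lambda p Psi"
    and I0: "I0 \<in> Lambda p"
    and h_meas: "\<And>m. h m \<in> borel_measurable (restrict_space lebesgue I0)"
    and h_nonneg: "\<And>x. x \<in> I0 \<Longrightarrow> 0 \<le> h 0 x"
    and h_mono: "\<And>m x. x \<in> I0 \<Longrightarrow> h m x \<le> h (Suc m) x"
    and h_inf: "\<And>x. x \<in> I0 \<Longrightarrow> filterlim (\<lambda>m. h m x) at_top sequentially"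
    and partitions: "\<exists>C>0. \<exists>F :: nat \<Rightarrow> (real^'n) set set.
        (\<forall>m. finite (F m) \<and> F m \<subseteq> Lambda p \<and> \<Union>(F m) = I0 \<and>
             pairwise (\<lambda>A B. interior A \<inter> interior B = {}) (F m) \<and>
             (\<forall>J\<in>F m. \<forall>x\<in>J. \<forall>y\<in>J. h m x \<le> C * h m y)) \<and>
        (\<exists>\<delta>>0. \<forall>m. \<forall>J\<in>F m. \<delta> \<le> (LINT x:J|lebesgue. h m x))"
    and maximal: "(\<lambda>m. LINT x:{x\<in>I0. P_maximal p Psi x > ereal (h m x)}|lebesgue. h m x)
                    \<longlonglongrightarrow> 0"
    and deriv_ae: "AE x in lebesgue. P_deriv_exists p Psi x"
  shows "\<forall>I\<in>Lambda p. I \<subseteq> I0 \<longrightarrow>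
           (\<lambda>m. LINT x:I|lebesgue. trunc (P_deriv p Psi x) (h m x)) \<longlonglongrightarrow> Psi I"
proof (intro ballI impI)
  fix I assume IL: "I \<in> Lambda p" and II0: "I \<subseteq> I0"
  have pp: "pary p"
  proof
    fix j and i :: nat assume "1 \<le> i"
    then show "2 \<le> p j i" using p_ne1[of i] by (metis One_nat_def Suc_1 Suc_leI le_neq_implies_less)
  qed
  interpret pary p by (rule pp)
  have irr: "AE x in lebesgue. P_irrational p x"
    using deriv_ae by (rule AE_mp) (auto simp: P_deriv_exists_def has_P_deriv_def)
  have ppi: "pary_irr p" by (intro pary_irr.intro pp pary_irr_axioms.intro irr)
  interpret pary_irr p by (rule ppi)
  obtain B where pB: "\<And>j i. 1 \<le> i \<Longrightarrow> p j i \<le> B" using p_bdd by blast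
  obtain C F \<delta> where Cpos: "0 < C"
    and Fp: "\<And>m. finite (F m) \<and> F m \<subseteq> Lambda p \<and> \<Union>(F m) = I0 \<and>
             (\<forall>J\<in>F m. \<forall>x\<in>J. \<forall>y\<in>J. h m x \<le> C * h m y)"
    and dpos: "0 < \<delta>" and dlt: "\<And>m J. J \<in> F m \<Longrightarrow> \<delta> \<le> (LINT x:J|lebesgue. h m x)"
    using partitions by metis
  obtain r nI where Ip: "I = par p r nI" using IL unfolding Lambda_def Lambda_k_def by auto
  obtain s0 n0 where I0p: "I0 = par p s0 n0" using I0 unfolding Lambda_def Lambda_k_def by auto
  have I0s[measurable]: "I0 \<in> sets lebesgue" using I0p by simp
  have h_nn: "\<And>m x. x \<in> I0 \<Longrightarrow> 0 \<le> h m x"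
  proof -
    fix m x assume x: "x \<in> I0"
    show "0 \<le> h m x"
    proof (induction m)
      case 0 then show ?case using h_nonneg x by simp
    next
      case (Suc m) then show ?case using h_mono[OF x, of m] by simp
    qed
  qed
  define lam where "lam m x = indicator I0 x * h m x" for m x
  define G where "G m = {x\<in>I0. ereal (h m x) < P_maximal p Psi x}" for m
  define yK where "yK K = (SOME y. y \<in> K)" for K :: "(real^'n) set"
  define \<Lambda> where "\<Lambda> m = C * (\<Sum>K\<in>F m. \<bar>h m (yK K)\<bar>)" for m
  define K0 where "K0 = (C + C * C) * real B ^ CARD('n) + C"
  define \<epsilon>0 where "\<epsilon>0 = min \<delta> (vol r * \<delta> / (C * measure lebesgue I0))"
  have I0pos: "0 < measure lebesgue I0" using I0p measure_par_leb vol_pos by simp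
  have e0: "0 < \<epsilon>0" unfolding \<epsilon>0_def using dpos Cpos I0pos vol_pos[of r] by simp
  have lam_eq: "\<And>m x. x \<in> I0 \<Longrightarrow> lam m x = h m x" unfolding lam_def by simp
  have lam_meas: "\<And>m. lam m \<in> borel_measurable lebesgue"
  proof -
    fix m
    have "I0 \<inter> space lebesgue \<in> sets lebesgue" by simp
    from borel_measurable_restrict_space_iff[OF this, of "h m"] h_meas[of m]
    show "lam m \<in> borel_measurable lebesgue" unfolding lam_def by simp
  qed
  have GI0: "\<And>m. G m \<subseteq> I0" unfolding G_def by auto
  have intG: "\<And>m. integral\<^sup>L lebesgue (\<lambda>x. indicator (G m) x * lam m x)
      = (LINT x:{x\<in>I0. P_maximal p Psi x > ereal (h m x)}|lebesgue. h m x)"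
    unfolding set_lebesgue_integral_def G_def
    by (intro Bochner_Integration.integral_cong) (auto simp: indicator_def lam_def)
  have tend: "(\<lambda>m. integral\<^sup>L lebesgue (\<lambda>x. indicator (G m) x * lam m x)) \<longlonglongrightarrow> 0"
    unfolding intG by (rule maximal)
  have ev: "eventually (\<lambda>m. integral\<^sup>L lebesgue (\<lambda>x. indicator (G m) x * lam m x) < \<epsilon>0) sequentially"
    using order_tendstoD(2)[OF tend e0] .
  have bound: "cmod (Psi I - (LINT x:I|lebesgue. trunc (P_deriv p Psi x) (h m x)))
       \<le> K0 * integral\<^sup>L lebesgue (\<lambda>x. indicator (G m) x * lam m x)"
    if small: "integral\<^sup>L lebesgue (\<lambda>x. indicator (G m) x * lam m x) < \<epsilon>0" for m
  proof -
    have Gm_meas: "G m \<in> sets lebesgue"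
    proof -
      have "G m = I0 \<inter> (\<Union>J\<in>Lambda p. J \<inter> {x. lam m x < cmod (Psi J) / mu J})"
      proof (intro equalityI subsetI)
        fix x assume x: "x \<in> G m"
        then have xI0: "x \<in> I0" and lt: "ereal (h m x) < P_maximal p Psi x" unfolding G_def by auto
        from lt obtain J where J: "J \<in> Lambda p" "x \<in> J" "ereal (h m x) < ereal (cmod (Psi J) / mu J)"
          unfolding P_maximal_def less_SUP_iff by auto
        then show "x \<in> I0 \<inter> (\<Union>J\<in>Lambda p. J \<inter> {x. lam m x < cmod (Psi J) / mu J})"
          using xI0 lam_eq by auto
      next
        fix x assume "x \<in> I0 \<inter> (\<Union>J\<in>Lambda p. J \<inter> {x. lam m x < cmod (Psi J) / mu J})"
        then obtain J where xI0: "x \<in> I0" and J: "J \<in> Lambda p" "x \<in> J" "lam m x < cmod (Psi J) / mu J" by auto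
        have "ereal (h m x) < ereal (cmod (Psi J) / mu J)" using J(3) lam_eq[OF xI0] by simp
        then have "ereal (h m x) < P_maximal p Psi x"
          unfolding P_maximal_def less_SUP_iff using J by auto
        then show "x \<in> G m" unfolding G_def using xI0 by auto
      qed
      also have "\<dots> \<in> sets lebesgue"
      proof (rule sets.Int[OF I0s], rule sets.countable_UN''[OF countable_Lambda])
        fix J assume "J \<in> Lambda p"
        then obtain k n where "J = par p k n" unfolding Lambda_def Lambda_k_def by auto
        then have "J \<in> sets lebesgue" by simp
        moreover have "{x. lam m x < cmod (Psi J) / mu J} \<in> sets lebesgue"
          using lam_meas[of m] unfolding borel_measurable_iff_less by simp
        ultimately show "J \<inter> {x. lam m x < cmod (Psi J) / mu J} \<in> sets lebesgue" by auto
      qed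
      finally show ?thesis .
    qed
    have E: "est p Psi I0 (lam m) (G m) (F m) C \<delta> r nI B (\<Lambda> m)"
    proof (intro est.intro[OF ppi] est_axioms.intro)
      show "additive_on_Lambda p Psi" by (rule add)
      show "AE x in lebesgue. P_deriv_exists p Psi x" by (rule deriv_ae)
      show "\<And>j i. 1 \<le> i \<Longrightarrow> p j i \<le> B" by (rule pB)
      show "I0 \<in> Lambda p" by (rule I0)
      show "par p r nI \<subseteq> I0" using Ip II0 by simp
      show "lam m \<in> borel_measurable lebesgue" by (rule lam_meas)
      show "\<And>x. x \<in> I0 \<Longrightarrow> 0 \<le> lam m x" using lam_eq h_nn by simp
      show "finite (F m)" "F m \<subseteq> Lambda p" "\<Union>(F m) = I0" using Fp[of m] by auto
      show "0 < C" by (rule Cpos)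
      show "\<And>K x y. K \<in> F m \<Longrightarrow> x \<in> K \<Longrightarrow> y \<in> K \<Longrightarrow> lam m x \<le> C * lam m y"
      proof -
        fix K x y assume K: "K \<in> F m" "x \<in> K" "y \<in> K"
        then have "x \<in> I0" "y \<in> I0" using Fp[of m] by auto
        then show "lam m x \<le> C * lam m y" using Fp[of m] K lam_eq by simp
      qed
      show "\<And>x. x \<in> I0 \<Longrightarrow> lam m x \<le> \<Lambda> m"
      proof -
        fix x assume xI0: "x \<in> I0"
        then obtain K where K: "K \<in> F m" "x \<in> K" using Fp[of m] by auto
        then obtain k n where "K = par p k n" using Fp[of m] unfolding Lambda_def Lambda_k_def by blast
        then have "\<exists>y. y \<in> K" using par_nonempty by blast
        then have yK: "yK K \<in> K" unfolding yK_def by (rule someI_ex)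
        have "lam m x = h m x" using lam_eq xI0 by simp
        also have "\<dots> \<le> C * h m (yK K)" using Fp[of m] K yK by blast
        also have "\<dots> \<le> C * \<bar>h m (yK K)\<bar>" using Cpos by (intro mult_left_mono) auto
        also have "\<dots> \<le> C * (\<Sum>K\<in>F m. \<bar>h m (yK K)\<bar>)"
          using Cpos Fp[of m] K by (intro mult_left_mono member_le_sum[of K "F m" "\<lambda>K. \<bar>h m (yK K)\<bar>"]) auto
        finally show "lam m x \<le> \<Lambda> m" unfolding \<Lambda>_def .
      qed
      show "\<And>K. K \<in> F m \<Longrightarrow> \<delta> \<le> integral\<^sup>L lebesgue (\<lambda>x. indicator K x * lam m x)"
      proof -
        fix K assume K: "K \<in> F m"
        then have KI0: "K \<subseteq> I0" using Fp[of m] by auto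
        have "integral\<^sup>L lebesgue (\<lambda>x. indicator K x * lam m x) = (LINT x:K|lebesgue. h m x)"
          unfolding set_lebesgue_integral_def
          by (intro Bochner_Integration.integral_cong) (use KI0 lam_eq in \<open>auto simp: indicator_def\<close>)
        then show "\<delta> \<le> integral\<^sup>L lebesgue (\<lambda>x. indicator K x * lam m x)" using dlt[OF K] by simp
      qed
      show "G m = {x \<in> I0. ereal (lam m x) < P_maximal p Psi x}"
        unfolding G_def using lam_eq by auto
      show "G m \<in> sets lebesgue" by (rule Gm_meas)
      show "integral\<^sup>L lebesgue (\<lambda>x. indicator (G m) x * lam m x) < \<delta>"
        using small unfolding \<epsilon>0_def by simp
      show "integral\<^sup>L lebesgue (\<lambda>x. indicator (G m) x * lam m x) < vol r * \<delta> / (C * measure lebesgue I0)"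
        using small unfolding \<epsilon>0_def by simp
    qed
    have me: "cmod (Psi (par p r nI) - integral\<^sup>L lebesgue (\<lambda>x. indicator {x. idx p r x = nI} x *\<^sub>R est.TT p Psi (lam m) x))
     \<le> K0 * integral\<^sup>L lebesgue (\<lambda>x. indicator (G m) x * lam m x)"
      using est.main_est[OF E] unfolding K0_def by simp
    have "(LINT x:I|lebesgue. trunc (P_deriv p Psi x) (h m x))
       = integral\<^sup>L lebesgue (\<lambda>x. indicator {x. idx p r x = nI} x *\<^sub>R est.TT p Psi (lam m) x)"
    proof -
      have "(LINT x:I|lebesgue. trunc (P_deriv p Psi x) (h m x))
          = integral\<^sup>L lebesgue (\<lambda>x. indicator I x *\<^sub>R est.TT p Psi (lam m) x)"
        unfolding set_lebesgue_integral_def est.TT_def[OF E]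
        by (intro Bochner_Integration.integral_cong) (use II0 lam_eq in \<open>auto simp: indicator_def\<close>)
      also have "\<dots> = integral\<^sup>L lebesgue (\<lambda>x. indicator {x. idx p r x = nI} x *\<^sub>R est.TT p Psi (lam m) x)"
      proof (rule integral_cong_AE)
        have [measurable]: "est.TT p Psi (lam m) \<in> borel_measurable lebesgue" by (rule est.TT_meas[OF E])
        show "(\<lambda>x. indicator I x *\<^sub>R est.TT p Psi (lam m) x) \<in> borel_measurable lebesgue"
          using Ip by (intro borel_measurable_scaleR borel_measurable_indicator est.TT_meas[OF E]) simp
        show "(\<lambda>x. indicator {x. idx p r x = nI} x *\<^sub>R est.TT p Psi (lam m) x) \<in> borel_measurable lebesgue"
          by (intro borel_measurable_scaleR borel_measurable_indicator est.TT_meas[OF E] fiber_sets_leb)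
        show "AE x in lebesgue. indicator I x *\<^sub>R est.TT p Psi (lam m) x = indicator {x. idx p r x = nI} x *\<^sub>R est.TT p Psi (lam m) x"
          using AE_par_fiber[of r nI] by (rule AE_mp) (auto simp: Ip indicator_def)
      qed
      finally show ?thesis .
    qed
    then show ?thesis using me Ip by simp
  qed
  have "(\<lambda>m. (LINT x:I|lebesgue. trunc (P_deriv p Psi x) (h m x)) - Psi I) \<longlonglongrightarrow> 0"
  proof (rule Lim_null_comparison)
    show "eventually (\<lambda>m. norm ((LINT x:I|lebesgue. trunc (P_deriv p Psi x) (h m x)) - Psi I)
        \<le> K0 * integral\<^sup>L lebesgue (\<lambda>x. indicator (G m) x * lam m x)) sequentially"
      using ev by eventually_elim (use bound in \<open>simp add: norm_minus_commute\<close>)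
    show "(\<lambda>m. K0 * integral\<^sup>L lebesgue (\<lambda>x. indicator (G m) x * lam m x)) \<longlonglongrightarrow> 0"
      using tendsto_mult_right_zero[OF tend] .
  qed
  then show "(\<lambda>m. LINT x:I|lebesgue. trunc (P_deriv p Psi x) (h m x)) \<longlonglongrightarrow> Psi I"
    by (rule LIM_zero_cancel)
qed


end
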